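(* Let $\Omega$ be a bounded domain in $\mathbb R^n$, $n\ge3$, whose boundary $\partial\Omega$ is a smooth hypersurface, and let $(f,\Gamma)$ satisfy the standing structural assumptions. There exists $c_0=c_0(\Omega,f,\Gamma)>0$ such that: if $0<w\in LSC(\Omega)$ is a viscosity super-solution of $f(\lambda(-A^u))=1$ in $\Omega$ and $w\ge c$ on $\partial\Omega$ (i.e. $\liminf_{x\to\xi}w(x)\ge c$ for all $\xi\in\partial\Omega$) for some constant $c\ge c_0$, then for all $x\in\Omega$, $$w(x)\ge\frac{\alpha}{2^{\frac{n-2}{2}}\Big[\big(2+\alpha^{-\frac{2}{n-2}}c_0^{\frac{2}{n-2}}\,d(x)\big)d(x)+\alpha^{\frac{2}{n-2}}c^{-\frac{2}{n-2}}\Big]^{\frac{n-2}{2}}},\qquad d(x)=\mathrm{dist}(x,\partial\Omega),$$ where $\alpha=\alpha(f)$ is the constant of the canonical solutions.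
   Context: Let $n\ge3$. For a positive $C^2$ function $u$, its conformal Hessian is $A^u=-\frac{2}{n-2}u^{-\frac{n+2}{n-2}}\nabla^2u+\frac{2n}{(n-2)^2}u^{-\frac{2n}{n-2}}\nabla u\otimes\nabla u-\frac{2}{(n-2)^2}u^{-\frac{2n}{n-2}}|\nabla u|^2I$, and $\lambda(-A^u)$ is the vector of eigenvalues of $-A^u$. Let $\Gamma_n=\{\mu:\mu_i>0\ \forall i\}$. Standing structural assumptions on $(f,\Gamma)$: $\Gamma\subset\mathbb R^n$ is an open symmetric cone with vertex at the origin, $\Gamma+\Gamma_n\subset\Gamma$; $f\in C^0(\bar\Gamma)$ symmetric, $f>0$ in $\Gamma$, $f=0$ on $\partial\Gamma$, $f(\lambda+\mu)\ge f(\lambda)$ for $\lambda\in\Gamma,\mu\in\Gamma_n$, $f$ homogeneous of some positive degree. Viscosity super-solution: $w\in LSC(\Omega)$ (lower semicontinuous, values in $\mathbb R\cup\{+\infty\}$, $w\not\equiv+\infty$) such that for every $x_0\in\Omega$, $\varphi\in C^2(\Omega)$ with $(w-\varphi)(x_0)=0$, $w-\varphi\ge0$ near $x_0$, either $\lambda(-A^\varphi(x_0))\notin\bar\Gamma$ or $f(\lambda(-A^\varphi(x_0)))\le1$. Canonical solutions: there is a unique constant $\alpha=\alpha(f)>0$ such that for all $R>0$, $x_0\in\mathbb R^n$ the functions $u^{(in)}_{R,x_0}(x)=\alpha\big(\frac{R}{R^2-|x-x_0|^2}\big)^{\frac{n-2}{2}}$ and $u^{(out)}_{R,x_0}(x)=\alpha\big(\frac{R}{|x-x_0|^2-R^2}\big)^{\frac{n-2}{2}}$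 satisfy $f(\lambda(-A^{u}))=1$ in $B_R(x_0)$ and in $\mathbb R^n\setminus\bar B_R(x_0)$ respectively. *)

theory Defs
  imports "HOL-Analysis.Analysis"
begin

text \<open>Vector of eigenvalues of a (symmetric) matrix, in some order: the diagonal of an
orthogonal diagonalisation.  Since f and Gamma are symmetric, the order is irrelevant.\<close>
definition diag_mat :: "real^'n \<Rightarrow> real^'n^'n" where
  "diag_mat l = (\<chi> i j. if i = j then l $ i else 0)"

definition eigvals :: "real^'n^'n \<Rightarrow> real^'n" where
  "eigvals M = (SOME l. \<exists>Q. orthogonal_matrix Q \<and> transpose Q ** M ** Q = diag_mat l)"

definition conf_hess :: "real \<Rightarrow> real^'n \<Rightarrow> real^'n^'n \<Rightarrow> real^'n^'n" where
  "conf_hess u g H =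
     (let n = real CARD('n) in
        (- 2 / (n - 2) * u powr (- (n + 2) / (n - 2))) *\<^sub>R H
      + (2 * n / (n - 2)^2 * u powr (- 2 * n / (n - 2))) *\<^sub>R (\<chi> i j. g $ i * g $ j)
      - (2 / (n - 2)^2 * u powr (- 2 * n / (n - 2)) * (norm g)^2) *\<^sub>R mat 1)"

definition pos_cone :: "(real^'n) set" where
  "pos_cone = {l. \<forall>i. l $ i > 0}"

definition structural :: "(real^'n \<Rightarrow> real) \<Rightarrow> (real^'n) set \<Rightarrow> bool" where
  "structural f \<Gamma> \<longleftrightarrow>
     open \<Gamma> \<and>
     (\<forall>l\<in>\<Gamma>. \<forall>t>0. t *\<^sub>R l \<in> \<Gamma>) \<and>
     (\<forall>p. p permutes (UNIV::'n set) \<longrightarrow> (\<forall>l\<in>\<Gamma>. (\<chi> i. l $ p i) \<in> \<Gamma>)) \<and>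
     (\<forall>l\<in>\<Gamma>. \<forall>m\<in>pos_cone. l + m \<in> \<Gamma>) \<and>
     continuous_on (closure \<Gamma>) f \<and>
     (\<forall>p. p permutes (UNIV::'n set) \<longrightarrow> (\<forall>l\<in>closure \<Gamma>. f (\<chi> i. l $ p i) = f l)) \<and>
     (\<forall>l\<in>\<Gamma>. f l > 0) \<and>
     (\<forall>l\<in>frontier \<Gamma>. f l = 0) \<and>
     (\<forall>l\<in>\<Gamma>. \<forall>m\<in>pos_cone. f (l + m) \<ge> f l) \<and>
     (\<exists>d>0. \<forall>l\<in>closure \<Gamma>. \<forall>t>0. f (t *\<^sub>R l) = t powr d * f l)"

definition classical_sol :: "(real^'n \<Rightarrow> real) \<Rightarrow> (real^'n) set \<Rightarrow> (real^'n) set \<Rightarrow> (real^'n \<Rightarrow> real) \<Rightarrow> bool" where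
  "classical_sol f \<Gamma> S u \<longleftrightarrow>
     (\<exists>Du Hu. continuous_on S Hu \<and>
       (\<forall>x\<in>S. u x > 0 \<and> (u has_derivative (\<lambda>h. Du x \<bullet> h)) (at x) \<and>
               (Du has_derivative (\<lambda>h. Hu x *v h)) (at x) \<and>
               eigvals (- conf_hess (u x) (Du x) (Hu x)) \<in> \<Gamma> \<and>
               f (eigvals (- conf_hess (u x) (Du x) (Hu x))) = 1))"

definition canonical_const :: "(real^'n \<Rightarrow> real) \<Rightarrow> (real^'n) set \<Rightarrow> real \<Rightarrow> bool" where
  "canonical_const f \<Gamma> \<alpha> \<longleftrightarrow> \<alpha> > 0 \<and>
     (\<forall>R>0. \<forall>x0::real^'n.
        classical_sol f \<Gamma> (ball x0 R)
          (\<lambda>x. \<alpha> * (R / (R^2 - (norm (x - x0))^2)) powr ((real CARD('n) - 2) / 2)) \<and>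
        classical_sol f \<Gamma> (- cball x0 R)
          (\<lambda>x. \<alpha> * (R / ((norm (x - x0))^2 - R^2)) powr ((real CARD('n) - 2) / 2)))"

fun Ck :: "nat \<Rightarrow> (real^'n) set \<Rightarrow> (real^'n \<Rightarrow> real) \<Rightarrow> bool" where
  "Ck 0 S g = continuous_on S g"
| "Ck (Suc k) S g = (\<exists>Dg. (\<forall>x\<in>S. (g has_derivative (\<lambda>h. Dg x \<bullet> h)) (at x)) \<and>
                          (\<forall>i. Ck k S (\<lambda>x. Dg x $ i)))"

definition smooth_bdd_domain :: "(real^'n) set \<Rightarrow> bool" where
  "smooth_bdd_domain \<Omega> \<longleftrightarrow> open \<Omega> \<and> connected \<Omega> \<and> \<Omega> \<noteq> {} \<and> bounded \<Omega> \<and>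
     (\<forall>\<xi>\<in>frontier \<Omega>. \<exists>U \<rho>. open U \<and> \<xi> \<in> U \<and> (\<forall>k. Ck k U \<rho>) \<and>
         (\<forall>x\<in>U. \<exists>g. (\<rho> has_derivative (\<lambda>h. g \<bullet> h)) (at x) \<and> g \<noteq> 0) \<and>
         U \<inter> \<Omega> = {x\<in>U. \<rho> x < 0} \<and> U \<inter> frontier \<Omega> = {x\<in>U. \<rho> x = 0})"

definition lsc_on :: "(real^'n) set \<Rightarrow> (real^'n \<Rightarrow> ereal) \<Rightarrow> bool" where
  "lsc_on \<Omega> w \<longleftrightarrow> (\<forall>x\<in>\<Omega>. w x \<le> Liminf (at x) w)"

definition visc_super :: "(real^'n \<Rightarrow> real) \<Rightarrow> (real^'n) set \<Rightarrow> (real^'n) set \<Rightarrow> (real^'n \<Rightarrow> ereal) \<Rightarrow> bool" where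
  "visc_super f \<Gamma> \<Omega> w \<longleftrightarrow>
     lsc_on \<Omega> w \<and> (\<forall>x\<in>\<Omega>. w x \<noteq> - \<infinity>) \<and> (\<exists>x\<in>\<Omega>. w x \<noteq> \<infinity>) \<and>
     (\<forall>x0\<in>\<Omega>. \<forall>\<phi> D\<phi> H\<phi>.
        (continuous_on \<Omega> H\<phi> \<and>
         (\<forall>x\<in>\<Omega>. (\<phi> has_derivative (\<lambda>h. D\<phi> x \<bullet> h)) (at x) \<and>
                  (D\<phi> has_derivative (\<lambda>h. H\<phi> x *v h)) (at x)) \<and>
         w x0 = ereal (\<phi> x0) \<and>
         (\<forall>\<^sub>F x in at x0. ereal (\<phi> x) \<le> w x))
        \<longrightarrow> (eigvals (- conf_hess (\<phi> x0) (D\<phi> x0) (H\<phi> x0)) \<notin> closure \<Gamma> \<or>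
             f (eigvals (- conf_hess (\<phi> x0) (D\<phi> x0) (H\<phi> x0))) \<le> 1))"

end

theory Submission
  imports Defs
begin

lemma symm_dot:
  fixes M :: "real^'n^'n" assumes sym: "transpose M = M"
  shows "x \<bullet> (M *v y) = y \<bullet> (M *v x)"
proof -
  have "x \<bullet> (M *v y) = (x v* M) \<bullet> y" by (simp add: dot_lmul_matrix)
  also have "x v* M = transpose M *v x" by simp
  finally show ?thesis using sym by (simp add: inner_commute)
qed

lemma quad_expand:
  fixes M :: "real^'n^'n" assumes sym: "transpose M = M"
  shows "(x + t *\<^sub>R y) \<bullet> (M *v (x + t *\<^sub>R y)) = x \<bullet> (M *v x) + 2*t*(y \<bullet> (M *v x)) + t^2 * (y \<bullet> (M *v y))"
  using symm_dot[OF sym, of x y]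
  by (simp add: matrix_vector_right_distrib matrix_vector_mult_scaleR inner_add_left inner_add_right power2_eq_square algebra_simps)

lemma eigvec_exists:
  fixes M :: "real^'n^'n" assumes sym: "transpose M = M"
    and S: "subspace S" and inv: "\<And>x. x \<in> S \<Longrightarrow> M *v x \<in> S" and ne: "a \<in> S" "a \<noteq> 0"
  shows "\<exists>x\<in>S. norm x = 1 \<and> M *v x = (x \<bullet> (M *v x)) *\<^sub>R x"
proof -
  define K where "K = S \<inter> sphere 0 1"
  have "compact K" unfolding K_def
    using closed_subspace[OF S] compact_Int_closed[of "sphere 0 1" S] by (simp add: Int_commute)
  moreover have "K \<noteq> {}"
  proof -
    have "(1/norm a) *\<^sub>R a \<in> K" using ne S unfolding K_def by (simp add: subspace_scale)
    then show ?thesis by blast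
  qed
  moreover have "continuous_on K (\<lambda>x. x \<bullet> (M *v x))"
    by (intro continuous_intros)
  ultimately obtain x where xK: "x \<in> K" and xmax: "\<And>z. z \<in> K \<Longrightarrow> z \<bullet> (M *v z) \<le> x \<bullet> (M *v x)"
    using continuous_attains_sup[of K "\<lambda>x. x \<bullet> (M *v x)"] by blast
  have xS: "x \<in> S" and nx: "norm x = 1" using xK by (auto simp: K_def)
  have xx: "x \<bullet> x = 1" using nx by (simp add: norm_eq_1)
  let ?q = "\<lambda>z. z \<bullet> (M *v z)"
  have qscale: "?q z \<le> ?q x * (z \<bullet> z)" if "z \<in> S" for z
  proof (cases "z = 0")
    case True then show ?thesis by simp
  next
    case False
    have "(1/norm z) *\<^sub>R z \<in> K" using that False S by (simp add: K_def subspace_scale)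
    then have "?q ((1/norm z) *\<^sub>R z) \<le> ?q x" by (rule xmax)
    then have "(1/norm z)^2 * ?q z \<le> ?q x"
      by (simp add: matrix_vector_mult_scaleR power2_eq_square)
    then have "?q z \<le> ?q x * (norm z)^2" using False
      by (simp add: field_simps)
    then show ?thesis by (simp add: power2_norm_eq_inner)
  qed
  have orth0: "y \<bullet> (M *v x) = 0" if yS: "y \<in> S" and yx: "y \<bullet> x = 0" for y
  proof -
    define C where "C = ?q x * (y \<bullet> y) - ?q y"
    have key: "2 * t * (y \<bullet> (M *v x)) \<le> t^2 * C" for t
    proof -
      have zS: "x + t *\<^sub>R y \<in> S" using xS yS S by (simp add: subspace_add subspace_scale)
      have "(x + t *\<^sub>R y) \<bullet> (x + t *\<^sub>R y) = 1 + t^2 * (y \<bullet> y)"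
        using xx yx by (simp add: inner_add_left inner_add_right inner_commute power2_eq_square)
      then have e1: "?q (x + t *\<^sub>R y) \<le> ?q x * (1 + t^2 * (y \<bullet> y))"
        using qscale[OF zS] by simp
      have aux: "\<And>a b c d t::real. a + 2*t*b + t^2*c \<le> a*(1+t^2*d) \<Longrightarrow> 2*t*b \<le> t^2*(a*d - c)"
        by (simp add: algebra_simps)
      show ?thesis unfolding C_def
        by (rule aux) (use e1 quad_expand[OF sym, of x t y] in simp)
    qed
    have le: "y \<bullet> (M *v x) \<le> 0"
    proof (rule ccontr)
      assume "\<not> ?thesis"
      then have p: "y \<bullet> (M *v x) > 0" by simp
      define t where "t = (y \<bullet> (M *v x)) / (\<bar>C\<bar> + 1)"
      have tp: "t > 0" using p by (simp add: t_def)
      have "2 * t * (y \<bullet> (M *v x)) \<le> t^2 * C" by (rule key)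
      then have "2 * (y \<bullet> (M *v x)) \<le> t * C" using tp by (simp add: power2_eq_square mult.assoc)
      also have "t * C \<le> t * \<bar>C\<bar>" using tp by (simp add: mult_left_mono)
      also have "t * \<bar>C\<bar> < y \<bullet> (M *v x)" using p unfolding t_def
        by (simp add: divide_less_eq field_simps)
      finally show False using p by simp
    qed
    have ge: "y \<bullet> (M *v x) \<ge> 0"
    proof (rule ccontr)
      assume "\<not> ?thesis"
      then have p: "y \<bullet> (M *v x) < 0" by simp
      define t where "t = (y \<bullet> (M *v x)) / (\<bar>C\<bar> + 1)"
      have tp: "t < 0" using p by (simp add: t_def divide_neg_pos)
      have "2 * t * (y \<bullet> (M *v x)) \<le> t^2 * C" by (rule key)
      then have "2 * (y \<bullet> (M *v x)) \<ge> t * C" using tp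
        by (simp add: power2_eq_square mult.assoc mult_le_cancel_left)
      moreover have "t * C \<ge> t * \<bar>C\<bar>" using tp by (simp add: mult_left_mono_neg)
      moreover have "t * \<bar>C\<bar> > y \<bullet> (M *v x)" using p unfolding t_def
        by (simp add: field_simps)
      ultimately show False using p by simp
    qed
    from le ge show ?thesis by simp
  qed
  define lam where "lam = ?q x"
  define y where "y = M *v x - lam *\<^sub>R x"
  have yS: "y \<in> S" unfolding y_def using inv[OF xS] xS S by (simp add: subspace_diff subspace_scale)
  have yx: "y \<bullet> x = 0" unfolding y_def lam_def using xx
    by (simp add: inner_diff_left inner_diff_right inner_commute)
  have "y \<bullet> y = y \<bullet> (M *v x) - lam * (y \<bullet> x)" unfolding y_def by (simp add: inner_diff_right)
  also have "\<dots> = 0" using orth0[OF yS yx] yx by simp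
  finally have "y = 0" by simp
  then show ?thesis using xS nx unfolding y_def lam_def by (intro bexI[of _ x]) auto
qed

lemma eigbasis:
  fixes M :: "real^'n^'n" and I :: "'n set" assumes sym: "transpose M = M" and fin: "finite I"
  shows "\<exists>v lam. (\<forall>i\<in>I. \<forall>j\<in>I. v i \<bullet> v j = (if i = j then 1 else 0)) \<and> (\<forall>i\<in>I. M *v v i = lam i *\<^sub>R v i)"
  using fin
proof (induction I rule: finite_induct)
  case empty then show ?case by auto
next
  case (insert a I)
  then obtain v lam where orth: "\<forall>i\<in>I. \<forall>j\<in>I. v i \<bullet> v j = (if i = j then 1 else 0)"
     and eig: "\<forall>i\<in>I. M *v v i = lam i *\<^sub>R v i" by blast
  define S where "S = {x. \<forall>i\<in>I. v i \<bullet> x = 0}"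
  have sub: "subspace S" unfolding S_def subspace_def by (auto simp: inner_add_right)
  have inv: "M *v x \<in> S" if "x \<in> S" for x
    using that eig symm_dot[OF sym, of _ x] unfolding S_def by (auto simp: inner_commute)
  have "card I < CARD('n)"
  proof -
    have "I \<subset> UNIV" using insert(2) by blast
    then show ?thesis by (rule psubset_card_mono[rotated]) simp
  qed
  have "span (v ` I) \<noteq> UNIV"
  proof
    assume "span (v ` I) = UNIV"
    then have "dim (v ` I) = DIM(real^'n)" using dim_eq_full by blast
    moreover have "dim (v ` I) \<le> card (v ` I)" using insert(1) by (simp add: dim_le_card')
    moreover have "card (v ` I) \<le> card I" using insert(1) by (rule card_image_le)
    ultimately show False using \<open>card I < CARD('n)\<close> by simp
  qed
  then obtain b where b: "b \<noteq> 0" "\<forall>x\<in>span (v ` I). b \<bullet> x = 0"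
    using span_not_UNIV_orthogonal by blast
  have bS: "b \<in> S" unfolding S_def
  proof (intro CollectI ballI)
    fix i assume "i \<in> I"
    then have "v i \<in> span (v ` I)" by (intro span_base imageI)
    then show "v i \<bullet> b = 0" using b(2)[rule_format] inner_commute by metis
  qed
  obtain x where xS: "x \<in> S" and nx: "norm x = 1" and ex: "M *v x = (x \<bullet> (M *v x)) *\<^sub>R x"
    using eigvec_exists[OF sym sub inv bS b(1)] by blast
  have xx: "x \<bullet> x = 1" using nx by (simp add: norm_eq_1)
  have xo: "\<And>i. i \<in> I \<Longrightarrow> v i \<bullet> x = 0" using xS by (simp add: S_def)
  show ?case
    apply (rule exI[of _ "v(a := x)"], rule exI[of _ "lam(a := x \<bullet> (M *v x))"])
    using orth eig xx xo insert(2) ex by (auto simp: inner_commute)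
qed

lemma spectral:
  fixes M :: "real^'n^'n" assumes sym: "transpose M = M"
  shows "\<exists>Q l. orthogonal_matrix Q \<and> transpose Q ** M ** Q = diag_mat l"
proof -
  have fin: "finite (UNIV::'n set)" by simp
  obtain v lam where A: "\<forall>i\<in>(UNIV::'n set). \<forall>j\<in>UNIV. v i \<bullet> v j = (if i = j then 1 else 0)"
     and B: "\<forall>i\<in>(UNIV::'n set). M *v v i = lam i *\<^sub>R v i"
    using eigbasis[OF sym fin] by blast
  have orth: "\<forall>i j. v i \<bullet> v j = (if i = j then 1 else 0)" using A by blast
  have eig: "\<forall>i. M *v v i = lam i *\<^sub>R v i" using B by blast
  define Q :: "real^'n^'n" where "Q = transpose (\<chi> i. v i)"
  have QQ: "transpose Q ** Q = mat 1"
    unfolding Q_def using orth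
    by (simp add: matrix_matrix_mult_def mat_def vec_eq_iff transpose_def inner_vec_def)
  have "transpose Q ** M ** Q = diag_mat (\<chi> i. lam i)"
  proof -
    have "(transpose Q ** M ** Q) $ i $ j = v i \<bullet> (M *v v j)" for i j
      unfolding Q_def by (simp add: matrix_matrix_mult_def matrix_vector_mult_def transpose_def inner_vec_def
          sum_distrib_left sum_distrib_right mult.assoc mult.commute mult.left_commute) (rule sum.swap)
    then show ?thesis using orth eig by (simp add: vec_eq_iff diag_mat_def)
  qed
  then show ?thesis using QQ by (auto simp: orthogonal_matrix)
qed

lemma if0_mult: "(if P then a else 0) * (b::real) = (if P then a*b else 0)"
  and mult_if0: "(b::real) * (if P then a else 0) = (if P then b*a else 0)" by auto

lemma diag_match:
  fixes M Q1 Q2 :: "real^'n^'n"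
  assumes o1: "orthogonal_matrix Q1" and o2: "orthogonal_matrix Q2"
    and d1: "transpose Q1 ** M ** Q1 = diag_mat l1" and d2: "transpose Q2 ** M ** Q2 = diag_mat l2"
  shows "\<exists>p. p permutes UNIV \<and> (\<forall>i. l1 $ i = l2 $ p i)"
proof -
  define Om where "Om = transpose Q1 ** Q2"
  have q1: "Q1 ** transpose Q1 = mat 1" and q2: "Q2 ** transpose Q2 = mat 1"
    using o1 o2 by (auto simp: orthogonal_matrix_def)
  have "diag_mat l1 ** Om = transpose Q1 ** M ** Q2"
  proof -
    have "diag_mat l1 ** Om = transpose Q1 ** M ** (Q1 ** transpose Q1) ** Q2"
      unfolding Om_def d1[symmetric] by (simp add: matrix_mul_assoc)
    then show ?thesis using q1 by simp
  qed
  moreover have "Om ** diag_mat l2 = transpose Q1 ** M ** Q2"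
  proof -
    have "Om ** diag_mat l2 = transpose Q1 ** (Q2 ** transpose Q2) ** M ** Q2"
      unfolding Om_def d2[symmetric] by (simp add: matrix_mul_assoc)
    then show ?thesis using q2 by (simp add: matrix_mul_assoc)
  qed
  ultimately have eq: "diag_mat l1 ** Om = Om ** diag_mat l2" by simp
  have ent: "l1 $ i * Om $ i $ j = Om $ i $ j * l2 $ j" for i j
  proof -
    have "(diag_mat l1 ** Om) $ i $ j = l1 $ i * Om $ i $ j"
      by (simp add: matrix_matrix_mult_def diag_mat_def if0_mult)
    moreover have "(Om ** diag_mat l2) $ i $ j = Om $ i $ j * l2 $ j"
      by (simp add: matrix_matrix_mult_def diag_mat_def mult_if0)
    ultimately show ?thesis using eq by (simp add: mult.commute) (metis mult.commute)
  qed
  have "orthogonal_matrix Om" unfolding Om_def using o1 o2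
    by (simp add: orthogonal_matrix_mul)
  then have "det Om \<noteq> 0" using det_orthogonal_matrix by force
  then obtain p where p: "p permutes UNIV" and pr: "prod (\<lambda>i. Om$i$p i) UNIV \<noteq> 0"
    unfolding det_def by (metis (no_types, lifting) mem_Collect_eq mult_zero_right sum.neutral)
  have "\<forall>i. l1 $ i = l2 $ p i"
  proof
    fix i
    have "Om $ i $ p i \<noteq> 0" using pr by (simp add: prod_zero_iff)
    then show "l1 $ i = l2 $ p i" using ent[of i "p i"] by simp
  qed
  with p show ?thesis by blast
qed

lemma mm_scaleR_left: "((c::real) *\<^sub>R (A::real^'n^'m)) ** (B::real^'k^'n) = c *\<^sub>R (A ** B)"
  by (simp add: vec_eq_iff matrix_matrix_mult_def sum_distrib_left mult.assoc)

lemma mm_scaleR_right: "(A::real^'n^'m) ** ((c::real) *\<^sub>R (B::real^'k^'n)) = c *\<^sub>R (A ** B)"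
  by (simp add: vec_eq_iff matrix_matrix_mult_def sum_distrib_left mult.left_commute)

lemma diag_scaleR: "diag_mat ((c::real) *\<^sub>R l) = c *\<^sub>R diag_mat l"
  by (simp add: vec_eq_iff diag_mat_def)

lemma eigvals_spec:
  fixes M :: "real^'n^'n" assumes sym: "transpose M = M"
  shows "\<exists>Q. orthogonal_matrix Q \<and> transpose Q ** M ** Q = diag_mat (eigvals M)"
  unfolding eigvals_def
  by (rule someI_ex[where P="\<lambda>l. \<exists>Q. orthogonal_matrix Q \<and> transpose Q ** M ** Q = diag_mat l"])
     (use spectral[OF sym] in blast)

lemma scaled_contra:
  fixes M :: "real^'n^'n" and f :: "real^'n \<Rightarrow> real"
  assumes st: "structural f \<Gamma>" and sym: "transpose M = M" and inG: "eigvals M \<in> \<Gamma>"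
    and f1: "f (eigvals M) = 1" and s1: "s > 1"
  shows "eigvals (s *\<^sub>R M) \<in> closure \<Gamma> \<and> f (eigvals (s *\<^sub>R M)) > 1"
proof -
  have sym2: "transpose (s *\<^sub>R M) = s *\<^sub>R M" using sym by (simp add: transpose_scalar)
  obtain Q1 where o1: "orthogonal_matrix Q1" and d1: "transpose Q1 ** M ** Q1 = diag_mat (eigvals M)"
    using eigvals_spec[OF sym] by blast
  obtain Q2 where o2: "orthogonal_matrix Q2" and d2: "transpose Q2 ** (s *\<^sub>R M) ** Q2 = diag_mat (eigvals (s *\<^sub>R M))"
    using eigvals_spec[OF sym2] by blast
  define L where "L = eigvals (s *\<^sub>R M)"
  define e where "e = eigvals M"
  have "transpose Q2 ** M ** Q2 = diag_mat ((1/s) *\<^sub>R L)"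
  proof -
    have "s *\<^sub>R (transpose Q2 ** M ** Q2) = diag_mat L" using d2 unfolding L_def
      by (simp add: mm_scaleR_left mm_scaleR_right)
    then have "(1/s) *\<^sub>R (s *\<^sub>R (transpose Q2 ** M ** Q2)) = (1/s) *\<^sub>R diag_mat L" by simp
    then show ?thesis using s1 by (simp add: diag_scaleR)
  qed
  from diag_match[OF o1 o2 d1 this] obtain p where p: "p permutes UNIV"
    and pe: "\<forall>i. e $ i = ((1/s) *\<^sub>R L) $ p i" unfolding e_def by blast
  have Leq: "L = s *\<^sub>R (\<chi> j. e $ inv p j)"
  proof -
    have "L $ j = s * e $ inv p j" for j
      using pe[rule_format, of "inv p j"] s1 permutes_inverses(1)[OF p, of j] by simp
    then show ?thesis by (simp add: vec_eq_iff)
  qed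
  have ip: "inv p permutes UNIV" using p by (rule permutes_inv)
  have unf: "open \<Gamma>" "\<forall>l\<in>\<Gamma>. \<forall>t>0. t *\<^sub>R l \<in> \<Gamma>"
     "\<forall>p. p permutes (UNIV::'n set) \<longrightarrow> (\<forall>l\<in>\<Gamma>. (\<chi> i. l $ p i) \<in> \<Gamma>)"
     "\<forall>p. p permutes (UNIV::'n set) \<longrightarrow> (\<forall>l\<in>closure \<Gamma>. f (\<chi> i. l $ p i) = f l)"
     "\<exists>d>0. \<forall>l\<in>closure \<Gamma>. \<forall>t>0. f (t *\<^sub>R l) = t powr d * f l"
    using st unfolding structural_def by auto
  obtain d where d: "d > 0" "\<forall>l\<in>closure \<Gamma>. \<forall>t>0. f (t *\<^sub>R l) = t powr d * f l" using unf(5) by blast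
  have eC: "e \<in> closure \<Gamma>" using inG closure_subset unfolding e_def by blast
  have pG: "(\<chi> j. e $ inv p j) \<in> \<Gamma>" using unf(3)[rule_format, OF ip] inG unfolding e_def by blast
  have LG: "L \<in> \<Gamma>" unfolding Leq using unf(2) pG s1 by simp
  have "f (\<chi> j. e $ inv p j) = f e" by (rule unf(4)[rule_format, OF ip eC])
  then have fp: "f (\<chi> j. e $ inv p j) = 1" using f1 unfolding e_def by simp
  have pC: "(\<chi> j. e $ inv p j) \<in> closure \<Gamma>" using pG closure_subset by blast
  have "f L = s powr d * f (\<chi> j. e $ inv p j)" unfolding Leq
    by (rule d(2)[rule_format, OF pC]) (use s1 in simp)
  then have "f L = s powr d" using fp by simp
  moreover have "s powr d > 1" using s1 d(1) using powr_less_mono[of 0 d s] by simp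
  ultimately show ?thesis using LG closure_subset unfolding L_def by auto
qed

lemma conf_hess_scale:
  assumes n3: "CARD('n) \<ge> 3" and t: "t > 0" and u: "u > 0"
  shows "conf_hess (t * u) (t *\<^sub>R g) (t *\<^sub>R (H::real^'n^'n))
       = (t powr (- 4 / (real CARD('n) - 2))) *\<^sub>R conf_hess u g H"
proof -
  define n where "n = real CARD('n)"
  have n2: "n - 2 > 0" using n3 unfolding n_def by simp
  have e1: "t * (t * u) powr (- (n + 2) / (n - 2)) = t powr (- 4 / (n - 2)) * u powr (- (n + 2) / (n - 2))"
  proof -
    have "t * (t * u) powr (- (n + 2) / (n - 2)) = t powr 1 * t powr (- (n + 2) / (n - 2)) * u powr (- (n + 2) / (n - 2))"
      using t u by (simp add: powr_mult)
    also have "t powr 1 * t powr (- (n + 2) / (n - 2)) = t powr (1 + - (n + 2) / (n - 2))"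
      by (simp only: powr_add)
    also have "1 + - (n + 2) / (n - 2) = - 4 / (n - 2)" using n2 by (simp add: field_simps)
    finally show ?thesis .
  qed
  have e2: "t^2 * (t * u) powr (- 2 * n / (n - 2)) = t powr (- 4 / (n - 2)) * u powr (- 2 * n / (n - 2))"
  proof -
    have "t^2 * (t * u) powr (- 2 * n / (n - 2)) = t powr 2 * t powr (- 2 * n / (n - 2)) * u powr (- 2 * n / (n - 2))"
      using t u by (simp add: powr_mult powr_realpow)
    also have "t powr 2 * t powr (- 2 * n / (n - 2)) = t powr (2 + - 2 * n / (n - 2))"
      by (simp only: powr_add)
    also have "2 + - 2 * n / (n - 2) = - 4 / (n - 2)" using n2 by (simp add: field_simps)
    finally show ?thesis .
  qed
  have m: "(\<chi> i j. (t *\<^sub>R g) $ i * (t *\<^sub>R g) $ j) = t^2 *\<^sub>R (\<chi> i j. g $ i * g $ j)"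
    by (simp add: vec_eq_iff power2_eq_square)
  have nn: "(norm (t *\<^sub>R g))^2 = t^2 * (norm g)^2" using t by (simp add: power_mult_distrib)
  define s where "s = t powr (- 4 / (n - 2))"
  define a where "a = - (n + 2) / (n - 2)"
  define b where "b = - 2 * n / (n - 2)"
  have c1: "(- 2 / (n - 2) * (t*u) powr a) *\<^sub>R (t *\<^sub>R H) = s *\<^sub>R ((- 2 / (n - 2) * u powr a) *\<^sub>R H)"
  proof -
    have "(- 2 / (n - 2) * (t*u) powr a) * t = - 2 / (n - 2) * (t * (t*u) powr a)" by simp
    also have "\<dots> = s * (- 2 / (n - 2) * u powr a)" using e1 unfolding a_def s_def by simp
    finally show ?thesis by simp
  qed
  have c2: "(2 * n / (n - 2)^2 * (t*u) powr b) *\<^sub>R (t^2 *\<^sub>R G) = s *\<^sub>R ((2 * n / (n - 2)^2 * u powr b) *\<^sub>R G)" for G :: "real^'n^'n"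
  proof -
    have "(2 * n / (n - 2)^2 * (t*u) powr b) * t^2 = 2 * n / (n - 2)^2 * (t^2 * (t*u) powr b)" by simp
    also have "\<dots> = s * (2 * n / (n - 2)^2 * u powr b)" using e2 unfolding b_def s_def by simp
    finally show ?thesis by simp
  qed
  have c3: "(2 / (n - 2)^2 * (t*u) powr b * (t^2 * (norm g)^2)) *\<^sub>R G = s *\<^sub>R ((2 / (n - 2)^2 * u powr b * (norm g)^2) *\<^sub>R G)" for G :: "real^'n^'n"
  proof -
    have "(2 / (n - 2)^2 * (t*u) powr b * (t^2 * (norm g)^2)) = 2 / (n - 2)^2 * (t^2 * (t*u) powr b) * (norm g)^2" by simp
    also have "\<dots> = s * (2 / (n - 2)^2 * u powr b * (norm g)^2)" using e2 unfolding b_def s_def by simp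
    finally show ?thesis by simp
  qed
  show ?thesis
    unfolding conf_hess_def Let_def n_def[symmetric] m nn a_def[symmetric] b_def[symmetric] s_def[symmetric]
    unfolding c1 c2 c3 by (simp add: scaleR_diff_right scaleR_add_right)
qed

lemma chain_real:
  fixes s :: "real^'n \<Rightarrow> real"
  assumes "(s has_derivative (\<lambda>h. a \<bullet> h)) (at x)" and "(\<phi> has_real_derivative d) (at (s x))"
  shows "((\<lambda>x. \<phi> (s x)) has_derivative (\<lambda>h. (d *\<^sub>R a) \<bullet> h)) (at x)"
proof -
  have "(\<phi> has_derivative (*) d) (at (s x))"
    using assms(2) by (simp add: has_field_derivative_def)
  from has_derivative_compose[OF assms(1) this] show ?thesis by (simp add: inner_scaleR_left)
qed

lemma sq_deriv:
  "((\<lambda>x::real^'n. (x - y) \<bullet> (x - y) - R^2) has_derivative (\<lambda>h. (2 *\<^sub>R (x - y)) \<bullet> h)) (at x)"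
proof -
  have id: "((\<lambda>x::real^'n. x - y) has_derivative (\<lambda>h. h)) (at x)"
    by (intro derivative_eq_intros) auto
  have "((\<lambda>x::real^'n. (x - y) \<bullet> (x - y) - R^2) has_derivative (\<lambda>h. ((x - y) \<bullet> h + h \<bullet> (x - y)) - 0)) (at x)"
    by (intro has_derivative_diff has_derivative_inner[OF id id] has_derivative_const)
  then show ?thesis by (simp add: inner_commute)
qed

definition ph :: "real \<Rightarrow> real \<Rightarrow> real \<Rightarrow> real \<Rightarrow> real" where
  "ph a R k v = a * (R / v) powr k"
definition ph1 :: "real \<Rightarrow> real \<Rightarrow> real \<Rightarrow> real \<Rightarrow> real" where
  "ph1 a R k v = - a * k * R powr k * v powr (-k-1)"
definition ph2 :: "real \<Rightarrow> real \<Rightarrow> real \<Rightarrow> real \<Rightarrow> real" where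
  "ph2 a R k v = a * k * (k+1) * R powr k * v powr (-k-2)"

lemma ph_deriv: assumes "v > 0" "R > 0" shows "(ph a R k has_real_derivative ph1 a R k v) (at v)"
proof -
  have d: "((\<lambda>v. a * R powr k * v powr (-k)) has_real_derivative a * R powr k * ((-k) * v powr (-k - 1))) (at v)"
    using has_real_derivative_powr[OF assms(1), of "-k"] by (intro DERIV_cmult) simp
  have e: "a * R powr k * v' powr (-k) = ph a R k v'" if "v' \<in> {0<..}" for v'
  proof -
    have "(R/v') powr k = R powr k * v' powr (-k)" using that assms by (simp add: powr_divide powr_minus field_simps)
    then show ?thesis by (simp add: ph_def)
  qed
  have "(ph a R k has_real_derivative a * R powr k * ((-k) * v powr (-k - 1))) (at v)"
    by (rule has_field_derivative_transform_within_open[OF d open_greaterThan]) (use assms e in auto)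
  then show ?thesis by (simp add: ph1_def algebra_simps)
qed

lemma ph1_deriv: assumes "v > 0" shows "(ph1 a R k has_real_derivative ph2 a R k v) (at v)"
proof -
  have "((\<lambda>v. (- a * k * R powr k) * v powr (-k-1)) has_real_derivative (- a * k * R powr k) * ((-k-1) * v powr (-k - 1 - 1))) (at v)"
    using has_real_derivative_powr[OF assms(1), of "-k-1"] by (intro DERIV_cmult) simp
  then show ?thesis unfolding ph1_def ph2_def by (simp add: algebra_simps)
qed

definition canD :: "real \<Rightarrow> real \<Rightarrow> real \<Rightarrow> real^'n \<Rightarrow> real^'n \<Rightarrow> real^'n" where
  "canD a R k y x = (2 * ph1 a R k ((x - y) \<bullet> (x - y) - R^2)) *\<^sub>R (x - y)"
definition canH :: "real \<Rightarrow> real \<Rightarrow> real \<Rightarrow> real^'n \<Rightarrow> real^'n \<Rightarrow> real^'n^'n" where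
  "canH a R k y x = (2 * ph1 a R k ((x - y) \<bullet> (x - y) - R^2)) *\<^sub>R mat 1
     + (4 * ph2 a R k ((x - y) \<bullet> (x - y) - R^2)) *\<^sub>R (\<chi> i j. (x - y) $ i * (x - y) $ j)"

lemma canH_sym: "transpose (canH a R k y x) = canH a R k y x"
  by (simp add: canH_def vec_eq_iff transpose_def mat_def mult.commute)

lemma can_deriv1:
  assumes "(x - y) \<bullet> (x - y) - R^2 > 0" "R > 0"
  shows "((\<lambda>x. ph a R k ((x - y) \<bullet> (x - y) - R^2)) has_derivative (\<lambda>h. canD a R k y x \<bullet> h)) (at x)"
  using chain_real[OF sq_deriv ph_deriv[OF assms]] by (simp add: canD_def algebra_simps)

lemma can_deriv2:
  assumes "(x - y) \<bullet> (x - y) - R^2 > 0"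
  shows "(canD a R k y has_derivative (\<lambda>h. canH a R k y x *v h)) (at x)"
proof -
  let ?s = "(x - y) \<bullet> (x - y) - R^2"
  have g: "((\<lambda>x. 2 * ph1 a R k ((x - y) \<bullet> (x - y) - R^2)) has_derivative (\<lambda>h. ((2 * ph2 a R k ?s) *\<^sub>R (2 *\<^sub>R (x - y))) \<bullet> h)) (at x)"
    using chain_real[OF sq_deriv DERIV_cmult[OF ph1_deriv[OF assms], of 2]] by simp
  have id: "((\<lambda>x. x - y) has_derivative (\<lambda>h. h)) (at x)"
    by (intro derivative_eq_intros) auto
  have "(canD a R k y has_derivative (\<lambda>h. (2 * ph1 a R k ?s) *\<^sub>R h + (((2 * ph2 a R k ?s) *\<^sub>R (2 *\<^sub>R (x - y))) \<bullet> h) *\<^sub>R (x - y))) (at x)"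
    unfolding canD_def[abs_def] using has_derivative_scaleR[OF g id] by simp
  moreover have "(\<lambda>h. (2 * ph1 a R k ?s) *\<^sub>R h + (((2 * ph2 a R k ?s) *\<^sub>R (2 *\<^sub>R (x - y))) \<bullet> h) *\<^sub>R (x - y))
     = (\<lambda>h. canH a R k y x *v h)"
  proof
    fix h
    have "(\<chi> i j. (x - y) $ i * (x - y) $ j) *v h = ((x - y) \<bullet> h) *\<^sub>R (x - y)"
      by (simp add: vec_eq_iff matrix_vector_mult_def inner_vec_def sum_distrib_left mult.commute mult.left_commute)
    then show "(2 * ph1 a R k ?s) *\<^sub>R h + (((2 * ph2 a R k ?s) *\<^sub>R (2 *\<^sub>R (x - y))) \<bullet> h) *\<^sub>R (x - y) = canH a R k y x *v h"
      unfolding canH_def by (simp add: matrix_vector_mult_add_rdistrib scaleR_matrix_vector_assoc[symmetric] inner_scaleR_left)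
  qed
  ultimately show ?thesis by simp
qed

lemma inner_fun_eq: "(\<lambda>h. a \<bullet> h) = (\<lambda>h. b \<bullet> h) \<Longrightarrow> a = (b::real^'n)"
proof -
  assume "(\<lambda>h. a \<bullet> h) = (\<lambda>h. b \<bullet> h)"
  then have "(a - b) \<bullet> (a - b) = 0" by (metis (no_types) inner_diff_left right_minus_eq)
  then show ?thesis by simp
qed

lemma canon_sym:
  fixes u :: "real^'n \<Rightarrow> real"
  assumes R: "R > 0"
    and ueq: "\<And>x. u x = a * (R / ((norm (x - y))^2 - R^2)) powr k"
    and du: "\<forall>x\<in>- cball y R. (u has_derivative (\<lambda>h. Du x \<bullet> h)) (at x) \<and> (Du has_derivative (\<lambda>h. Hu x *v h)) (at x)"
    and z: "z \<in> - cball y R"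
  shows "Hu z = canH a R k y z"
proof -
  have S: "open (- cball y R)" by (simp add: open_Compl)
  have pos: "(x - y) \<bullet> (x - y) - R^2 > 0" if "x \<in> - cball y R" for x
  proof -
    have "norm (x - y) > R" using that by (simp add: dist_norm norm_minus_commute)
    then have "(norm (x - y))^2 > R^2" using R by (simp add: power_strict_mono)
    then show ?thesis by (simp add: power2_norm_eq_inner)
  qed
  have ueq': "u = (\<lambda>x. ph a R k ((x - y) \<bullet> (x - y) - R^2))"
    by (rule ext) (simp add: ueq ph_def power2_norm_eq_inner)
  have Deq: "Du x = canD a R k y x" if "x \<in> - cball y R" for x
  proof -
    have "(\<lambda>h. Du x \<bullet> h) = (\<lambda>h. canD a R k y x \<bullet> h)"
      using has_derivative_unique[OF du[rule_format, OF that, THEN conjunct1]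
          can_deriv1[OF pos[OF that] R, of a k, folded ueq']] .
    then show ?thesis by (rule inner_fun_eq)
  qed
  have "(canD a R k y has_derivative (\<lambda>h. Hu z *v h)) (at z)"
    by (rule has_derivative_transform_within_open[OF du[rule_format, OF z, THEN conjunct2] S z])
       (simp add: Deq)
  from has_derivative_unique[OF this can_deriv2[OF pos[OF z]]]
  show ?thesis by (simp add: matrix_eq fun_eq_iff)
qed

lemma comparison:
  fixes w :: "real^'n \<Rightarrow> ereal" and u :: "real^'n \<Rightarrow> real"
  assumes om: "open \<Omega>" "bounded \<Omega>"
    and lsc: "lsc_on \<Omega> w" and wpos: "\<forall>x\<in>\<Omega>. w x > 0"
    and bdry: "\<forall>\<xi>\<in>frontier \<Omega>. Liminf (at \<xi> within \<Omega>) w \<ge> ereal c"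
    and cpos: "c > 0"
    and ucont: "continuous_on \<Omega> u" and upos: "\<forall>x\<in>\<Omega>. u x > 0" and uc: "\<forall>x\<in>\<Omega>. u x \<le> c"
    and touch: "\<And>t z. 0 < t \<Longrightarrow> t < 1 \<Longrightarrow> z \<in> \<Omega> \<Longrightarrow> w z = ereal (t * u z) \<Longrightarrow>
                   (\<forall>x\<in>\<Omega>. ereal (t * u x) \<le> w x) \<Longrightarrow> False"
  shows "\<forall>x\<in>\<Omega>. ereal (u x) \<le> w x"
proof (rule ccontr)
  assume "\<not> ?thesis"
  then obtain z1 where z1: "z1 \<in> \<Omega>" "\<not> ereal (u z1) \<le> w z1" by blast
  define T where "T = {t. 0 \<le> t \<and> t \<le> 1 \<and> (\<forall>x\<in>\<Omega>. ereal (t * u x) \<le> w x)}"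
  have T0: "0 \<in> T" unfolding T_def using wpos by (auto simp: zero_ereal_def[symmetric] less_imp_le)
  have bdd: "bdd_above T" unfolding T_def by (auto intro: bdd_aboveI[of _ 1])
  define t0 where "t0 = Sup T"
  have t0ge: "0 \<le> t0" unfolding t0_def by (rule cSup_upper[OF T0 bdd])
  have t0le: "t0 \<le> 1" unfolding t0_def
  proof (rule cSup_least)
    show "T \<noteq> {}" using T0 by blast
  next
    fix x assume "x \<in> T" then show "x \<le> 1" by (simp add: T_def)
  qed
  have t0T: "\<forall>x\<in>\<Omega>. ereal (t0 * u x) \<le> w x"
  proof
    fix x assume x: "x \<in> \<Omega>"
    show "ereal (t0 * u x) \<le> w x"
    proof (cases "w x")
      case (real r)
      have "t0 \<le> r / u x" unfolding t0_def
      proof (rule cSup_least)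
        show "T \<noteq> {}" using T0 by blast
        fix t assume "t \<in> T"
        then have "t * u x \<le> r" using x real unfolding T_def by auto
        then show "t \<le> r / u x" using upos x by (simp add: pos_le_divide_eq)
      qed
      then show ?thesis using real upos x by (simp add: pos_le_divide_eq)
    qed (use wpos x in auto)
  qed
  have t0lt: "t0 < 1"
  proof (rule ccontr)
    assume "\<not> t0 < 1" then have "t0 = 1" using t0le by simp
    then show False using t0T z1 by auto
  qed
  define ts where "ts m = t0 + (1 - t0) / (real m + 2)" for m :: nat
  have ts_gt: "t0 < ts m" for m unfolding ts_def using t0lt by simp
  have ts_lt: "ts m < 1" for m
  proof -
    have "(1 - t0) / (real m + 2) < 1 - t0" using t0lt by (simp add: divide_less_eq)
    then show ?thesis unfolding ts_def by simp
  qed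
  have ts_lim: "ts \<longlonglongrightarrow> t0"
  proof -
    have "(\<lambda>m. (1 - t0) / (real m + 2)) \<longlonglongrightarrow> 0"
    proof -
      have "filterlim (\<lambda>m. real m + 2) at_top sequentially"
        using filterlim_tendsto_add_at_top[OF tendsto_const filterlim_real_sequentially, of 2]
        by (simp add: add.commute)
      then have "filterlim (\<lambda>m. real m + 2) at_infinity sequentially"
        by (rule filterlim_at_top_imp_at_infinity)
      then show ?thesis by (rule tendsto_divide_0[OF tendsto_const])
    qed
    then show ?thesis unfolding ts_def using tendsto_add[OF tendsto_const[of t0]] by fastforce
  qed
  have "\<forall>m. \<exists>z\<in>\<Omega>. w z < ereal (ts m * u z)"
  proof
    fix m
    have "ts m \<notin> T"
    proof
      assume "ts m \<in> T"
      then have "ts m \<le> t0" unfolding t0_def by (rule cSup_upper[OF _ bdd])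
      then show False using ts_gt[of m] by simp
    qed
    then show "\<exists>z\<in>\<Omega>. w z < ereal (ts m * u z)"
      using ts_gt[of m] ts_lt[of m] t0ge unfolding T_def by (auto simp: not_le)
  qed
  then obtain zs where zs: "\<And>m. zs m \<in> \<Omega>" "\<And>m. w (zs m) < ereal (ts m * u (zs m))" by metis
  have "compact (closure \<Omega>)" using om(2) by (simp add: compact_closure)
  moreover have "\<forall>m. zs m \<in> closure \<Omega>" using zs(1) closure_subset by blast
  ultimately obtain l r where l: "l \<in> closure \<Omega>" and r: "strict_mono r" and lim: "(zs \<circ> r) \<longlonglongrightarrow> l"
    using seq_compactE[OF compact_imp_seq_compact] by metis
  have tsr: "(ts \<circ> r) \<longlonglongrightarrow> t0" using LIMSEQ_subseq_LIMSEQ[OF ts_lim r] .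
  show False
  proof (cases "l \<in> \<Omega>")
    case False
    then have lF: "l \<in> frontier \<Omega>" using l om(1) by (simp add: frontier_def interior_open)
    define \<tau> where "\<tau> = (t0 + 1) / 2"
    have tau: "t0 < \<tau>" "\<tau> < 1" using t0lt by (auto simp: \<tau>_def)
    have "ereal (\<tau> * c) < ereal c" using tau cpos by simp
    also have "\<dots> \<le> Liminf (at l within \<Omega>) w" using bdry lF by blast
    finally have ev1: "eventually (\<lambda>x. ereal (\<tau> * c) < w x) (at l within \<Omega>)" by (rule less_LiminfD)
    have flim: "filterlim (zs \<circ> r) (at l within \<Omega>) sequentially"
      unfolding filterlim_at using lim zs(1) False by (auto intro!: always_eventually)
    have ev2: "eventually (\<lambda>m. ereal (\<tau> * c) < w ((zs \<circ> r) m)) sequentially"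
      by (rule eventually_compose_filterlim[OF ev1 flim])
    have ev3: "eventually (\<lambda>m. (ts \<circ> r) m < \<tau>) sequentially"
      using order_tendstoD(2)[OF tsr tau(1)] .
    obtain m where m1: "ereal (\<tau> * c) < w (zs (r m))" and m2: "ts (r m) < \<tau>"
      using eventually_happens[OF eventually_conj[OF ev2 ev3]] by auto
    have "ts (r m) * u (zs (r m)) \<le> \<tau> * c"
      using m2 uc zs(1) upos ts_gt[of "r m"] t0ge
      by (intro mult_mono) (auto simp: less_imp_le)
    then have "ereal (ts (r m) * u (zs (r m))) \<le> ereal (\<tau> * c)" by simp
    then have "w (zs (r m)) < ereal (\<tau> * c)" using zs(2)[of "r m"] by (rule order.strict_trans2[rotated])
    then show False using m1 by simp
  next
    case True
    have tl: "ereal (t0 * u l) \<le> w l" using t0T True by blast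
    have ul: "u l > 0" using upos True by blast
    have eq: "w l = ereal (t0 * u l)"
    proof (rule ccontr)
      assume "w l \<noteq> ereal (t0 * u l)"
      then have lt: "ereal (t0 * u l) < w l" using tl by simp
      obtain q2 where q2: "ereal (t0 * u l) < ereal q2" "ereal q2 < w l"
        using ereal_dense2[OF lt] by blast
      define q1 where "q1 = (t0 * u l + q2) / 2"
      define \<tau> where "\<tau> = q1 / u l"
      have q12: "t0 * u l < q1" "q1 < q2" using q2(1) by (auto simp: q1_def)
      have tau: "t0 < \<tau>" using q12 ul by (simp add: \<tau>_def pos_less_divide_eq)
      have tauu: "\<tau> * u l = q1" using ul by (simp add: \<tau>_def)
      have "ereal q2 < Liminf (at l) w" using q2(2) lsc True unfolding lsc_on_def
        by (blast intro: order.strict_trans2)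
      then have e1: "eventually (\<lambda>x. ereal q2 < w x) (at l)" by (rule less_LiminfD)
      have "isCont u l" using ucont om(1) True by (simp add: continuous_on_eq_continuous_at)
      then have "((\<lambda>x. \<tau> * u x) \<longlongrightarrow> \<tau> * u l) (at l)"
        by (intro tendsto_mult tendsto_const) (simp add: isCont_def)
      then have e2: "eventually (\<lambda>x. \<tau> * u x < q2) (at l)"
        using order_tendstoD(2)[of _ "\<tau> * u l" _ q2] tauu q12 by auto
      have e12: "eventually (\<lambda>x. ereal (\<tau> * u x) < w x) (at l)"
        using eventually_conj[OF e1 e2] by eventually_elim (rule less_trans[of _ "ereal q2"], simp_all)
      have "ereal (\<tau> * u l) < ereal q2" using tauu q12 by simp
      then have pl: "ereal (\<tau> * u l) < w l" using q2(2) by (rule less_trans)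
      have "eventually (\<lambda>x. x \<noteq> l \<longrightarrow> x \<in> UNIV \<longrightarrow> ereal (\<tau> * u x) < w x) (nhds l)"
        using e12 unfolding eventually_at_filter .
      then have en: "eventually (\<lambda>x. ereal (\<tau> * u x) < w x) (nhds l)"
        by (rule eventually_mono) (use pl in auto)
      have ev2: "eventually (\<lambda>m. ereal (\<tau> * u ((zs \<circ> r) m)) < w ((zs \<circ> r) m)) sequentially"
        using eventually_compose_filterlim[OF en lim] .
      have ev3: "eventually (\<lambda>m. (ts \<circ> r) m < \<tau>) sequentially"
        using order_tendstoD(2)[OF tsr tau] .
      obtain m where m1: "ereal (\<tau> * u (zs (r m))) < w (zs (r m))" and m2: "ts (r m) < \<tau>"
        using eventually_happens[OF eventually_conj[OF ev2 ev3]] by auto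
      have "ts (r m) * u (zs (r m)) \<le> \<tau> * u (zs (r m))"
        using m2 upos zs(1) by (intro mult_right_mono) (auto simp: less_imp_le)
      then have "ereal (ts (r m) * u (zs (r m))) \<le> ereal (\<tau> * u (zs (r m)))" by simp
      then have "w (zs (r m)) < ereal (\<tau> * u (zs (r m)))" using zs(2)[of "r m"] by (rule order.strict_trans2[rotated])
      then show False using m1 by simp
    qed
    have t0pos: "t0 > 0"
    proof (rule ccontr)
      assume "\<not> t0 > 0" then have "t0 = 0" using t0ge by simp
      then have "w l = 0" using eq by (simp add: zero_ereal_def)
      then show False using wpos True by force
    qed
    show False by (rule touch[OF t0pos t0lt True eq t0T])
  qed
qed

lemma onorm_inner: "onorm (\<lambda>h. (a::real^'n) \<bullet> h) \<le> norm a"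
  by (rule onorm_le) (simp add: Cauchy_Schwarz_ineq2)

lemma C2_lip:
  fixes \<rho> :: "real^'n \<Rightarrow> real"
  assumes U: "open U" "\<xi> \<in> U" and C2: "Ck (Suc (Suc 0)) U \<rho>"
  shows "\<exists>Dg. (\<forall>x\<in>U. (\<rho> has_derivative (\<lambda>h. Dg x \<bullet> h)) (at x)) \<and>
    (\<exists>\<delta>0>0. \<exists>L>0. cball \<xi> \<delta>0 \<subseteq> U \<and>
       (\<forall>x\<in>cball \<xi> \<delta>0. \<forall>x'\<in>cball \<xi> \<delta>0. norm (Dg x - Dg x') \<le> L * norm (x - x')))"
proof -
  obtain Dg where d1: "\<forall>x\<in>U. (\<rho> has_derivative (\<lambda>h. Dg x \<bullet> h)) (at x)"
    and c1: "\<forall>i. Ck (Suc 0) U (\<lambda>x. Dg x $ i)" using C2 by auto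
  have "\<forall>i. \<exists>D2. (\<forall>x\<in>U. ((\<lambda>x. Dg x $ i) has_derivative (\<lambda>h. D2 x \<bullet> h)) (at x)) \<and>
       (\<forall>j. continuous_on U (\<lambda>x. D2 x $ j))" using c1 by simp
  then obtain D2 where d2: "\<And>i x. x \<in> U \<Longrightarrow> ((\<lambda>x. Dg x $ i) has_derivative (\<lambda>h. D2 i x \<bullet> h)) (at x)"
    and c2: "\<And>i j. continuous_on U (\<lambda>x. D2 i x $ j)" by metis
  obtain \<delta>0 where d0: "\<delta>0 > 0" "cball \<xi> \<delta>0 \<subseteq> U" using U open_contains_cball by blast
  let ?K = "cball \<xi> \<delta>0"
  have "\<forall>i j. \<exists>b>0. \<forall>x\<in>?K. \<bar>D2 i x $ j\<bar> \<le> b"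
  proof (intro allI)
    fix i j
    have "compact ((\<lambda>x. D2 i x $ j) ` ?K)"
      by (rule compact_continuous_image[OF continuous_on_subset[OF c2 d0(2)]]) simp
    then have "bounded ((\<lambda>x. D2 i x $ j) ` ?K)" by (rule compact_imp_bounded)
    then show "\<exists>b>0. \<forall>x\<in>?K. \<bar>D2 i x $ j\<bar> \<le> b" unfolding bounded_pos by auto
  qed
  then obtain B where Bp: "\<And>i j. B i j > 0" and Bb: "\<And>i j x. x \<in> ?K \<Longrightarrow> \<bar>D2 i x $ j\<bar> \<le> B i j"
    by metis
  define L where "L = (\<Sum>i\<in>UNIV. \<Sum>j\<in>UNIV. B i j) + 1"
  have Lp: "L > 0" unfolding L_def using Bp by (simp add: sum_nonneg less_imp_le add_nonneg_pos)
  have comp: "\<bar>Dg x $ i - Dg x' $ i\<bar> \<le> (\<Sum>j\<in>UNIV. B i j) * norm (x - x')"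
    if x: "x \<in> ?K" and x': "x' \<in> ?K" for x x' i
  proof -
    have "norm ((\<lambda>x. Dg x $ i) x - (\<lambda>x. Dg x $ i) x') \<le> (\<Sum>j\<in>UNIV. B i j) * norm (x - x')"
    proof (rule differentiable_bound[OF convex_cball _ _ x x'])
      fix z assume z: "z \<in> ?K"
      show "((\<lambda>x. Dg x $ i) has_derivative (\<lambda>h. D2 i z \<bullet> h)) (at z within ?K)"
        using d2[of z i] z d0(2) has_derivative_at_withinI by blast
      have "onorm (\<lambda>h. D2 i z \<bullet> h) \<le> norm (D2 i z)" by (rule onorm_inner)
      also have "\<dots> \<le> (\<Sum>j\<in>UNIV. \<bar>D2 i z $ j\<bar>)" by (rule norm_le_l1_cart)
      also have "\<dots> \<le> (\<Sum>j\<in>UNIV. B i j)" using Bb z by (intro sum_mono) auto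
      finally show "onorm (\<lambda>h. D2 i z \<bullet> h) \<le> (\<Sum>j\<in>UNIV. B i j)" .
    qed
    then show ?thesis by simp
  qed
  have "\<forall>x\<in>?K. \<forall>x'\<in>?K. norm (Dg x - Dg x') \<le> L * norm (x - x')"
  proof (intro ballI)
    fix x x' assume x: "x \<in> ?K" and x': "x' \<in> ?K"
    have "norm (Dg x - Dg x') \<le> (\<Sum>i\<in>UNIV. \<bar>(Dg x - Dg x') $ i\<bar>)" by (rule norm_le_l1_cart)
    also have "\<dots> \<le> (\<Sum>i\<in>UNIV. (\<Sum>j\<in>UNIV. B i j) * norm (x - x'))"
      using comp[OF x x'] by (intro sum_mono) simp
    also have "\<dots> = (\<Sum>i\<in>UNIV. \<Sum>j\<in>UNIV. B i j) * norm (x - x')" by (simp add: sum_distrib_right)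
    also have "\<dots> \<le> L * norm (x - x')" unfolding L_def by (simp add: mult_right_mono)
    finally show "norm (Dg x - Dg x') \<le> L * norm (x - x')" .
  qed
  then show ?thesis using d1 d0 Lp by blast
qed

lemma local_ext:
  fixes \<rho> :: "real^'n \<Rightarrow> real" and Dg :: "real^'n \<Rightarrow> real^'n"
  assumes U: "open U" "\<xi> \<in> U"
    and d1: "\<forall>x\<in>U. (\<rho> has_derivative (\<lambda>h. Dg x \<bullet> h)) (at x)"
    and d0: "\<delta>0 > 0" "cball \<xi> \<delta>0 \<subseteq> U" and Lp: "L > 0"
    and lip: "\<forall>x\<in>cball \<xi> \<delta>0. \<forall>x'\<in>cball \<xi> \<delta>0. norm (Dg x - Dg x') \<le> L * norm (x - x')"
    and nz: "Dg \<xi> \<noteq> 0"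
    and UO: "U \<inter> \<Omega> = {x\<in>U. \<rho> x < 0}" and UF: "U \<inter> frontier \<Omega> = {x\<in>U. \<rho> x = 0}"
  shows "\<exists>\<delta>>0. \<exists>r>0. \<forall>\<xi>'\<in>frontier \<Omega> \<inter> ball \<xi> \<delta>. \<exists>y. dist y \<xi>' = r \<and> ball y r \<inter> \<Omega> = {}"
proof -
  define m where "m = norm (Dg \<xi>) / 2"
  have mp: "m > 0" using nz by (simp add: m_def)
  define \<delta> where "\<delta> = min \<delta>0 (norm (Dg \<xi>) / L)"
  have \<delta>p: "\<delta> > 0" using d0 nz Lp by (simp add: \<delta>_def)
  define r where "r = min (\<delta> / 4) (m / (2 * L))"
  have rp: "r > 0" using \<delta>p mp Lp by (simp add: r_def)
  have r1: "r \<le> \<delta> / 4" by (simp add: r_def)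
  have r2': "r \<le> m / (2 * L)" by (simp add: r_def)
  have r2: "2 * L * r \<le> m" using mult_left_mono[OF r2', of "2 * L"] Lp by simp
  have "\<forall>\<xi>'\<in>frontier \<Omega> \<inter> ball \<xi> (\<delta>/2). \<exists>y. dist y \<xi>' = r \<and> ball y r \<inter> \<Omega> = {}"
  proof
    fix \<xi>' assume \<xi>': "\<xi>' \<in> frontier \<Omega> \<inter> ball \<xi> (\<delta>/2)"
    have dxi: "norm (\<xi>' - \<xi>) < \<delta> / 2" using \<xi>' by (simp add: dist_norm norm_minus_commute)
    have \<xi>'K: "\<xi>' \<in> cball \<xi> \<delta>0" using dxi \<delta>p unfolding \<delta>_def by (simp add: dist_norm norm_minus_commute)
    have \<xi>'U: "\<xi>' \<in> U" using \<xi>'K d0 by blast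
    have \<rho>0: "\<rho> \<xi>' = 0" using UF \<xi>' \<xi>'U by blast
    have "norm (Dg \<xi> - Dg \<xi>') \<le> L * norm (\<xi> - \<xi>')" using lip \<xi>'K d0 by simp
    also have "\<dots> \<le> L * (\<delta> / 2)" using dxi Lp by (simp add: norm_minus_commute)
    also have "\<dots> \<le> m" using Lp unfolding m_def \<delta>_def by (simp add: field_simps min_def)
    finally have "norm (Dg \<xi> - Dg \<xi>') \<le> m" .
    then have gm: "norm (Dg \<xi>') \<ge> m" using norm_triangle_ineq2[of "Dg \<xi>" "Dg \<xi>'"] unfolding m_def
      by linarith
    define g where "g = Dg \<xi>'"
    define \<nu> where "\<nu> = (1 / norm g) *\<^sub>R g"
    have gnz: "norm g > 0" using gm mp unfolding g_def by linarith
    have n\<nu>: "norm \<nu> = 1" using gnz by (simp add: \<nu>_def)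
    define y where "y = \<xi>' + r *\<^sub>R \<nu>"
    have "dist y \<xi>' = r" using n\<nu> rp by (simp add: y_def dist_norm)
    moreover have "ball y r \<inter> \<Omega> = {}"
    proof (rule ccontr)
      assume "ball y r \<inter> \<Omega> \<noteq> {}"
      then obtain z where zb: "z \<in> ball y r" and zO: "z \<in> \<Omega>" by blast
      define v where "v = z - \<xi>'"
      have zy: "norm (v - r *\<^sub>R \<nu>) < r" using zb by (simp add: v_def y_def dist_norm norm_minus_commute algebra_simps)
      have "norm v \<le> norm (v - r *\<^sub>R \<nu>) + norm (r *\<^sub>R \<nu>)" using norm_triangle_ineq[of "v - r *\<^sub>R \<nu>" "r *\<^sub>R \<nu>"] by simp
      then have nv: "norm v < 2 * r" using zy n\<nu> rp by simp
      have zK: "z \<in> cball \<xi> \<delta>0"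
      proof -
        have "norm (z - \<xi>) \<le> norm v + norm (\<xi>' - \<xi>)" unfolding v_def
          using norm_triangle_ineq[of "z - \<xi>'" "\<xi>' - \<xi>"] by simp
        also have "\<dots> < \<delta>" using nv dxi r1 by simp
        finally show ?thesis unfolding \<delta>_def by (simp add: dist_norm norm_minus_commute)
      qed
      have zU: "z \<in> U" using zK d0 by blast
      have \<rho>neg: "\<rho> z < 0" using UO zU zO by blast
      have seg: "closed_segment \<xi>' z \<subseteq> cball \<xi> \<delta>0" by (rule closed_segment_subset[OF \<xi>'K zK convex_cball])
      have tay: "norm (\<rho> z - \<rho> \<xi>' - (\<lambda>h. Dg \<xi>' \<bullet> h) (z - \<xi>')) \<le> norm (z - \<xi>') * (L * norm (z - \<xi>'))"
      proof (rule differentiable_bound_linearization[where S = "closed_segment \<xi>' z" and f' = "\<lambda>x h. Dg x \<bullet> h"])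
        fix t :: real assume "t \<in> {0..1}"
        then show "\<xi>' + t *\<^sub>R (z - \<xi>') \<in> closed_segment \<xi>' z"
          unfolding in_segment by (intro exI[of _ t]) (auto simp: algebra_simps)
      next
        fix x assume x: "x \<in> closed_segment \<xi>' z"
        then have "x \<in> U" using seg d0 by blast
        then show "(\<rho> has_derivative (\<lambda>h. Dg x \<bullet> h)) (at x within closed_segment \<xi>' z)"
          using d1 has_derivative_at_withinI by blast
      next
        fix x assume x: "x \<in> closed_segment \<xi>' z"
        have xK: "x \<in> cball \<xi> \<delta>0" using x seg by blast
        have "onorm ((\<lambda>h. Dg x \<bullet> h) - (\<lambda>h. Dg \<xi>' \<bullet> h)) = onorm (\<lambda>h. (Dg x - Dg \<xi>') \<bullet> h)"
          by (simp add: fun_diff_def inner_diff_left)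
        also have "\<dots> \<le> norm (Dg x - Dg \<xi>')" by (rule onorm_inner)
        also have "\<dots> \<le> L * norm (x - \<xi>')" using lip xK \<xi>'K by blast
        also have "\<dots> \<le> L * norm (z - \<xi>')" using segment_bound1[OF x] Lp by simp
        finally show "onorm ((\<lambda>h. Dg x \<bullet> h) - (\<lambda>h. Dg \<xi>' \<bullet> h)) \<le> L * norm (z - \<xi>')" .
      qed simp
      have tay2: "\<rho> z \<ge> g \<bullet> v - L * (norm v)^2"
        using tay \<rho>0 unfolding g_def v_def by (simp add: power2_eq_square abs_le_iff mult.commute mult.left_commute)
      have "(norm (v - r *\<^sub>R \<nu>))^2 < r^2" using zy by (simp add: power_strict_mono)
      moreover have "\<nu> \<bullet> \<nu> = 1" using n\<nu> by (simp add: norm_eq_1)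
      moreover have "(norm (v - r *\<^sub>R \<nu>))^2 = v \<bullet> v - 2 * r * (\<nu> \<bullet> v) + r^2 * (\<nu> \<bullet> \<nu>)"
        unfolding power2_norm_eq_inner by (simp add: inner_diff_left inner_diff_right inner_commute algebra_simps power2_eq_square)
      ultimately have "v \<bullet> v - 2 * r * (\<nu> \<bullet> v) + r^2 < r^2" by simp
      then have key: "(norm v)^2 < 2 * r * (\<nu> \<bullet> v)" by (simp add: power2_norm_eq_inner)
      have gv: "g \<bullet> v = norm g * (\<nu> \<bullet> v)" using gnz by (simp add: \<nu>_def)
      have "0 < 2 * r * (\<nu> \<bullet> v)" using key zero_le_power2[of "norm v"] by linarith
      then have nvpos: "\<nu> \<bullet> v > 0" using rp by (simp add: zero_less_mult_iff)
      have "2 * r * (L * (norm v)^2) \<le> m * (norm v)^2"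
      proof -
        have "2 * L * r * (norm v)^2 \<le> m * (norm v)^2" using r2 by (rule mult_right_mono) simp
        then show ?thesis by (simp add: algebra_simps)
      qed
      also have "\<dots> \<le> m * (2 * r * (\<nu> \<bullet> v))" using key mp by simp
      finally have "L * (norm v)^2 \<le> m * (\<nu> \<bullet> v)" using rp by (simp add: mult.left_commute)
      also have "m * (\<nu> \<bullet> v) \<le> norm g * (\<nu> \<bullet> v)" using gm nvpos by (simp add: g_def mult_right_mono)
      finally have "L * (norm v)^2 \<le> g \<bullet> v" using gv by simp
      moreover have "L * (norm v)^2 < g \<bullet> v"
      proof -
        have "m * (norm v)^2 < m * (2 * r * (\<nu> \<bullet> v))" using key mp by simp
        then have "2 * r * (L * (norm v)^2) < m * (2 * r * (\<nu> \<bullet> v))"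
          using \<open>2 * r * (L * (norm v)^2) \<le> m * (norm v)^2\<close> by simp
        then have "L * (norm v)^2 < m * (\<nu> \<bullet> v)" using rp by (simp add: mult.left_commute)
        also have "m * (\<nu> \<bullet> v) \<le> norm g * (\<nu> \<bullet> v)" using gm nvpos by (simp add: g_def mult_right_mono)
        finally show ?thesis using gv by simp
      qed
      then have "\<rho> z > 0" using tay2 by simp
      then show False using \<rho>neg by simp
    qed
    ultimately show "\<exists>y. dist y \<xi>' = r \<and> ball y r \<inter> \<Omega> = {}" by blast
  qed
  then show ?thesis using \<delta>p rp by (intro exI[of _ "\<delta>/2"]) auto
qed

lemma inner_fun_eq': "(\<lambda>h. a \<bullet> h) = (\<lambda>h. b \<bullet> h) \<Longrightarrow> a = (b::real^'n)"
proof -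
  assume "(\<lambda>h. a \<bullet> h) = (\<lambda>h. b \<bullet> h)"
  then have "(a - b) \<bullet> (a - b) = 0" by (metis (no_types) inner_diff_left right_minus_eq)
  then show ?thesis by simp
qed

lemma shrink_ball:
  fixes y \<xi> :: "real^'n"
  assumes "dist y \<xi> = R" "ball y R \<inter> \<Omega> = {}" "0 < r" "r \<le> R"
  shows "\<exists>y'. dist y' \<xi> = r \<and> ball y' r \<inter> \<Omega> = {}"
proof -
  define y' where "y' = \<xi> + (r / R) *\<^sub>R (y - \<xi>)"
  have Rp: "R > 0" using assms by simp
  have "dist y' \<xi> = r" using assms Rp by (simp add: y'_def dist_norm)
  moreover have "ball y' r \<subseteq> ball y R"
  proof
    fix z assume "z \<in> ball y' r"
    then have zr: "norm (z - y') < r" by (simp add: dist_norm norm_minus_commute)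
    have "y' - y = (r / R - 1) *\<^sub>R (y - \<xi>)" by (simp add: y'_def algebra_simps)
    then have "norm (y' - y) = (1 - r / R) * R" using assms Rp
      by (simp add: dist_norm abs_if divide_le_eq_1)
    also have "\<dots> = R - r" using Rp by (simp add: field_simps)
    finally have "norm (y' - y) = R - r" .
    moreover have "norm (z - y) \<le> norm (z - y') + norm (y' - y)"
      using norm_triangle_ineq[of "z - y'" "y' - y"] by simp
    ultimately have "norm (z - y) < R" using zr by simp
    then show "z \<in> ball y R" by (simp add: dist_norm norm_minus_commute)
  qed
  ultimately show ?thesis using assms(2) by blast
qed

lemma ext_uniform:
  fixes \<Omega> :: "(real^'n) set"
  assumes sm: "smooth_bdd_domain \<Omega>"
  shows "\<exists>r>0. \<forall>\<xi>\<in>frontier \<Omega>. \<exists>y. dist y \<xi> = r \<and> ball y r \<inter> \<Omega> = {}"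
proof -
  have loc: "\<exists>\<delta>>0. \<exists>r>0. \<forall>\<xi>'\<in>frontier \<Omega> \<inter> ball \<xi> \<delta>. \<exists>y. dist y \<xi>' = r \<and> ball y r \<inter> \<Omega> = {}"
    if \<xi>: "\<xi> \<in> frontier \<Omega>" for \<xi>
  proof -
    obtain U \<rho> where U: "open U" "\<xi> \<in> U" and ck: "\<forall>k. Ck k U \<rho>"
      and gr: "\<forall>x\<in>U. \<exists>g. (\<rho> has_derivative (\<lambda>h. g \<bullet> h)) (at x) \<and> g \<noteq> 0"
      and UO: "U \<inter> \<Omega> = {x\<in>U. \<rho> x < 0}" and UF: "U \<inter> frontier \<Omega> = {x\<in>U. \<rho> x = 0}"
      using sm \<xi> unfolding smooth_bdd_domain_def by blast
    obtain Dg \<delta>0 L where d1: "\<forall>x\<in>U. (\<rho> has_derivative (\<lambda>h. Dg x \<bullet> h)) (at x)"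
      and d0: "\<delta>0 > 0" "cball \<xi> \<delta>0 \<subseteq> U" and Lp: "L > 0"
      and lip: "\<forall>x\<in>cball \<xi> \<delta>0. \<forall>x'\<in>cball \<xi> \<delta>0. norm (Dg x - Dg x') \<le> L * norm (x - x')"
      using C2_lip[OF U, of \<rho>] ck by blast
    obtain g where g: "(\<rho> has_derivative (\<lambda>h. g \<bullet> h)) (at \<xi>)" "g \<noteq> 0" using gr U by blast
    have "Dg \<xi> = g" using has_derivative_unique[OF d1[rule_format, OF U(2)] g(1)] by (rule inner_fun_eq')
    then have nz: "Dg \<xi> \<noteq> 0" using g by simp
    show ?thesis by (rule local_ext[OF U d1 d0 Lp lip nz UO UF])
  qed
  then have "\<forall>\<xi>\<in>frontier \<Omega>. \<exists>\<delta>. \<delta> > 0 \<and> (\<exists>r. r > 0 \<and> (\<forall>\<xi>'\<in>frontier \<Omega> \<inter> ball \<xi> \<delta>. \<exists>y. dist y \<xi>' = r \<and> ball y r \<inter> \<Omega> = {}))"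
    by blast
  then obtain D where D: "\<forall>\<xi>\<in>frontier \<Omega>. D \<xi> > 0 \<and> (\<exists>r. r > 0 \<and> (\<forall>\<xi>'\<in>frontier \<Omega> \<inter> ball \<xi> (D \<xi>). \<exists>y. dist y \<xi>' = r \<and> ball y r \<inter> \<Omega> = {}))"
    by (rule bchoice[elim_format]) blast
  then have "\<forall>\<xi>\<in>frontier \<Omega>. \<exists>r. r > 0 \<and> (\<forall>\<xi>'\<in>frontier \<Omega> \<inter> ball \<xi> (D \<xi>). \<exists>y. dist y \<xi>' = r \<and> ball y r \<inter> \<Omega> = {})"
    by blast
  then obtain R where R: "\<forall>\<xi>\<in>frontier \<Omega>. R \<xi> > 0 \<and> (\<forall>\<xi>'\<in>frontier \<Omega> \<inter> ball \<xi> (D \<xi>). \<exists>y. dist y \<xi>' = R \<xi> \<and> ball y (R \<xi>) \<inter> \<Omega> = {})"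
    by (rule bchoice[elim_format]) blast
  have DR: "D \<xi> > 0 \<and> R \<xi> > 0 \<and>
      (\<forall>\<xi>'\<in>frontier \<Omega> \<inter> ball \<xi> (D \<xi>). \<exists>y. dist y \<xi>' = R \<xi> \<and> ball y (R \<xi>) \<inter> \<Omega> = {})"
    if "\<xi> \<in> frontier \<Omega>" for \<xi> using D R that by blast
  have cf: "compact (frontier \<Omega>)" using sm unfolding smooth_bdd_domain_def by (simp add: compact_frontier_bounded)
  have cov: "frontier \<Omega> \<subseteq> (\<Union>\<xi>\<in>frontier \<Omega>. ball \<xi> (D \<xi>))" using DR by force
  obtain K where K: "K \<subseteq> frontier \<Omega>" "finite K" "frontier \<Omega> \<subseteq> (\<Union>\<xi>\<in>K. ball \<xi> (D \<xi>))"
    by (rule compactE_image[OF cf _ cov]) auto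
  define r0 where "r0 = Min (insert 1 (R ` K))"
  have r0p: "r0 > 0" unfolding r0_def using K DR by (subst Min_gr_iff) auto
  have r0le: "r0 \<le> R \<xi>" if "\<xi> \<in> K" for \<xi> unfolding r0_def using K that by (intro Min_le) auto
  have "\<forall>\<xi>'\<in>frontier \<Omega>. \<exists>y. dist y \<xi>' = r0 \<and> ball y r0 \<inter> \<Omega> = {}"
  proof
    fix \<xi>' assume \<xi>': "\<xi>' \<in> frontier \<Omega>"
    then obtain \<xi> where \<xi>: "\<xi> \<in> K" "\<xi>' \<in> ball \<xi> (D \<xi>)" using K by blast
    then obtain y where "dist y \<xi>' = R \<xi>" "ball y (R \<xi>) \<inter> \<Omega> = {}" using DR[of \<xi>] K \<xi>' by blast
    then show "\<exists>y. dist y \<xi>' = r0 \<and> ball y r0 \<inter> \<Omega> = {}"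
      by (rule shrink_ball[OF _ _ r0p r0le[OF \<xi>(1)]])
  qed
  then show ?thesis using r0p by blast
qed

lemma e_facts:
  fixes N \<alpha> r c c0 :: real
  assumes N: "N \<ge> 3" and a: "\<alpha> > 0" and r: "r > 0" and c0: "c0 = \<alpha> * r powr (- (N - 2) / 2)"
    and cc: "c \<ge> c0"
  defines "e \<equiv> \<alpha> powr (2 / (N - 2)) * c powr (- 2 / (N - 2))"
  shows "c0 > 0" "c > 0" "e > 0" "e \<le> r" "\<alpha> powr (- 2 / (N - 2)) * c0 powr (2 / (N - 2)) = 1 / r"
    "\<alpha> * e powr (- ((N - 2) / 2)) = c"
proof -
  show c0p: "c0 > 0" using a r c0 by simp
  then show cp: "c > 0" using cc by simp
  show "e > 0" using a cp by (simp add: e_def)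
  have N2: "N - 2 > 0" using N by simp
  have x1: "(- (N - 2) / 2) * (- 2 / (N - 2)) = 1" using N2 by (simp add: field_simps)
  have x2: "(- (N - 2) / 2) * (2 / (N - 2)) = -1" using N2 by (simp add: field_simps)
  have x3: "(2 / (N - 2)) * (- ((N - 2) / 2)) = -1" using N2 by (simp add: field_simps)
  have x4: "(- 2 / (N - 2)) * (- ((N - 2) / 2)) = 1" using N2 by (simp add: field_simps)
  have "e \<le> \<alpha> powr (2 / (N - 2)) * c0 powr (- 2 / (N - 2))" unfolding e_def
    using powr_mono2'[of "- 2 / (N - 2)" c0 c] N2 c0p cc a by (simp add: mult_left_mono)
  also have "\<dots> = r"
  proof -
    have "c0 powr (- 2 / (N - 2)) = \<alpha> powr (- 2 / (N - 2)) * (r powr (- (N - 2) / 2)) powr (- 2 / (N - 2))"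
      using a r by (simp add: c0 powr_mult)
    also have "(r powr (- (N - 2) / 2)) powr (- 2 / (N - 2)) = r" using r by (simp only: powr_powr x1) simp
    finally have "c0 powr (- 2 / (N - 2)) = \<alpha> powr (- 2 / (N - 2)) * r" .
    then show ?thesis using a by (simp add: powr_minus_divide)
  qed
  finally show "e \<le> r" .
  show "\<alpha> powr (- 2 / (N - 2)) * c0 powr (2 / (N - 2)) = 1 / r"
  proof -
    have "c0 powr (2 / (N - 2)) = \<alpha> powr (2 / (N - 2)) * (r powr (- (N - 2) / 2)) powr (2 / (N - 2))"
      using a r by (simp add: c0 powr_mult)
    also have "(r powr (- (N - 2) / 2)) powr (2 / (N - 2)) = r powr (-1)" by (simp only: powr_powr x2)
    finally show ?thesis using a r by (simp add: powr_minus_divide powr_minus)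
  qed
  show "\<alpha> * e powr (- ((N - 2) / 2)) = c"
  proof -
    have "e powr (- ((N - 2) / 2)) = (\<alpha> powr (2 / (N - 2))) powr (- ((N - 2) / 2)) * (c powr (- 2 / (N - 2))) powr (- ((N - 2) / 2))"
      unfolding e_def using a cp by (simp add: powr_mult)
    also have "\<dots> = \<alpha> powr (-1) * c" using a cp by (simp only: powr_powr x3 x4) simp
    finally show ?thesis using a by (simp add: powr_minus)
  qed
qed

lemma R_facts:
  fixes e r :: real
  assumes e: "e > 0" "e \<le> r"
  defines "R \<equiv> (sqrt (e^2 + 4 * r^2) - e) / 2"
  shows "R > 0" "R < r" "r / 2 \<le> R" "r^2 - R^2 = e * R"
proof -
  have r: "r > 0" using e by simp
  have s1: "sqrt (e^2 + 4 * r^2) > e"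
    using r e by (simp add: real_less_rsqrt power2_eq_square)
  show "R > 0" using s1 by (simp add: R_def)
  have "sqrt (e^2 + 4 * r^2) < e + 2 * r"
    using r e by (intro real_sqrt_less_iff[THEN iffD2] real_less_lsqrt) (auto simp: power2_eq_square algebra_simps)
  then show "R < r" by (simp add: R_def)
  have "r + e \<le> sqrt (e^2 + 4 * r^2)"
    using r e by (intro real_le_rsqrt) (auto simp: power2_eq_square algebra_simps)
  then show "r / 2 \<le> R" by (simp add: R_def)
  have sq: "(sqrt (e^2 + 4 * r^2))^2 = e^2 + 4 * r^2" by simp
  show "r^2 - R^2 = e * R" unfolding R_def using sq
    by (simp add: power2_eq_square field_simps)
qed

lemma final_bound:
  fixes N \<alpha> r e R d \<rho> :: real
  assumes N: "N \<ge> 3" and a: "\<alpha> > 0" and e: "e > 0" and R: "R > 0" "R < r" "r / 2 \<le> R" "r^2 - R^2 = e * R"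
    and d: "d \<ge> 0" and \<rho>: "r \<le> \<rho>" "\<rho> \<le> r + d"
  shows "\<alpha> / (2 powr ((N - 2) / 2) * ((2 + (1 / r) * d) * d + e) powr ((N - 2) / 2))
         \<le> \<alpha> * (R / (\<rho>^2 - R^2)) powr ((N - 2) / 2)"
proof -
  define k where "k = (N - 2) / 2"
  have k: "k \<ge> 0" using N by (simp add: k_def)
  have r: "r > 0" using R by simp
  define X where "X = (2 + (1 / r) * d) * d + e"
  have "(2 + (1 / r) * d) * d \<ge> 0" using d r by simp
  then have Xp: "X > 0" using e unfolding X_def by linarith
  have sp: "\<rho>^2 - R^2 > 0" using power_strict_mono[of R \<rho> 2] R \<rho> by simp
  have s_le: "\<rho>^2 - R^2 \<le> (r + d)^2 - R^2" using \<rho> r by (simp add: power_mono)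
  have "(r + d)^2 - R^2 = e * R + 2 * r * d + d^2" using R(4) by (simp add: power2_eq_square algebra_simps)
  also have "\<dots> \<le> 2 * R * X"
  proof -
    have "2 * r * d \<le> 4 * R * d" using R(3) d by (simp add: mult_right_mono)
    moreover have "d^2 \<le> 2 * R * d^2 / r"
    proof -
      have "r * d^2 \<le> 2 * R * d^2" using mult_right_mono[of r "2*R" "d^2"] R(3) by simp
      then show ?thesis using r by (simp add: pos_le_divide_eq mult.commute)
    qed
    moreover have "e * R \<le> 2 * R * e" using e R by simp
    moreover have "2 * R * X = 4 * R * d + 2 * R * d^2 / r + 2 * R * e" using r
      by (simp add: X_def field_simps power2_eq_square)
    ultimately show ?thesis by linarith
  qed
  finally have "\<rho>^2 - R^2 \<le> 2 * R * X" using s_le by linarith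
  then have le: "1 / (2 * X) \<le> R / (\<rho>^2 - R^2)" using sp Xp R by (simp add: field_simps)
  have "\<alpha> / (2 powr k * X powr k) = \<alpha> * (1 / (2 * X)) powr k"
    using Xp by (simp add: powr_mult powr_divide)
  also have "\<dots> \<le> \<alpha> * (R / (\<rho>^2 - R^2)) powr k"
    using powr_mono2[OF k _ le] Xp a by (simp add: mult_left_mono)
  finally show ?thesis unfolding k_def X_def .
qed

lemma conf_hess_sym:
  assumes "transpose H = H"
  shows "transpose (- conf_hess u g (H::real^'n^'n)) = - conf_hess u g H"
proof -
  have "transpose H $ i $ j = H $ i $ j" for i j using assms by simp
  then have "H $ j $ i = H $ i $ j" for i j by (simp add: transpose_def)
  then show ?thesis
    by (simp add: vec_eq_iff transpose_def conf_hess_def Let_def mat_def mult.commute)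
qed

theorem lemma3p3:
  fixes \<Omega> :: "(real^'n) set" and f :: "real^'n \<Rightarrow> real" and \<Gamma> :: "(real^'n) set"
    and \<alpha> :: real
  assumes "CARD('n) \<ge> 3"
    and "smooth_bdd_domain \<Omega>"
    and "structural f \<Gamma>"
    and "canonical_const f \<Gamma> \<alpha>"
  shows "\<exists>c0>0. \<forall>w c.
     (visc_super f \<Gamma> \<Omega> w \<and> (\<forall>x\<in>\<Omega>. w x > 0) \<and> c \<ge> c0 \<and>
      (\<forall>\<xi>\<in>frontier \<Omega>. Liminf (at \<xi> within \<Omega>) w \<ge> ereal c))
     \<longrightarrow> (\<forall>x\<in>\<Omega>.
          let n = real CARD('n); d = infdist x (frontier \<Omega>) in
          w x \<ge> ereal (\<alpha> / (2 powr ((n - 2) / 2) *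
             ((2 + \<alpha> powr (- 2 / (n - 2)) * c0 powr (2 / (n - 2)) * d) * d
              + \<alpha> powr (2 / (n - 2)) * c powr (- 2 / (n - 2))) powr ((n - 2) / 2))))"
proof -
  note n3 = assms(1) and sm = assms(2) and st = assms(3) and cc = assms(4)
  define N where "N = real CARD('n)"
  have N3: "N \<ge> 3" using n3 unfolding N_def by simp
  have apos: "\<alpha> > 0" using cc unfolding canonical_const_def by simp
  have om: "open \<Omega>" "bounded \<Omega>" "\<Omega> \<noteq> {}" using sm unfolding smooth_bdd_domain_def by auto
  obtain r where rp: "r > 0" and ext: "\<forall>\<xi>\<in>frontier \<Omega>. \<exists>y. dist y \<xi> = r \<and> ball y r \<inter> \<Omega> = {}"
    using ext_uniform[OF sm] by blast
  define c0 where "c0 = \<alpha> * r powr (- (N - 2) / 2)"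
  have c0p: "c0 > 0" using apos rp by (simp add: c0_def)
  show ?thesis
  proof (intro exI[of _ c0] conjI allI impI ballI c0p)
    fix w c x
    assume H: "visc_super f \<Gamma> \<Omega> w \<and> (\<forall>x\<in>\<Omega>. w x > 0) \<and> c \<ge> c0 \<and>
      (\<forall>\<xi>\<in>frontier \<Omega>. Liminf (at \<xi> within \<Omega>) w \<ge> ereal c)"
    assume x: "x \<in> \<Omega>"
    have vs: "visc_super f \<Gamma> \<Omega> w" and wpos: "\<forall>x\<in>\<Omega>. w x > 0" and ccc: "c \<ge> c0"
      and bdry: "\<forall>\<xi>\<in>frontier \<Omega>. Liminf (at \<xi> within \<Omega>) w \<ge> ereal c" using H by auto
    define e where "e = \<alpha> powr (2 / (N - 2)) * c powr (- 2 / (N - 2))"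
    note EF = e_facts[OF N3 apos rp c0_def ccc, folded e_def]
    define R where "R = (sqrt (e^2 + 4 * r^2) - e) / 2"
    note RF = R_facts[OF EF(3) EF(4), folded R_def]
    define d where "d = infdist x (frontier \<Omega>)"
    have fne: "frontier \<Omega> \<noteq> {}"
      using om by (intro frontier_not_empty) (auto dest: bounded_subset[of UNIV])
    obtain \<xi> where \<xi>: "\<xi> \<in> frontier \<Omega>" "d = dist x \<xi>"
      using infdist_attains_inf[OF frontier_closed fne, of x] unfolding d_def by blast
    obtain y where y: "dist y \<xi> = r" "ball y r \<inter> \<Omega> = {}" using ext \<xi> by blast
    define k where "k = (N - 2) / 2"
    define u where "u = (\<lambda>z. \<alpha> * (R / ((norm (z - y))^2 - R^2)) powr k)"
    have "classical_sol f \<Gamma> (- cball y R) u"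
      using cc RF(1) unfolding canonical_const_def u_def k_def N_def by blast
    then obtain Du Hu where Hc: "continuous_on (- cball y R) Hu"
      and cs: "\<forall>z\<in>- cball y R. u z > 0 \<and> (u has_derivative (\<lambda>h. Du z \<bullet> h)) (at z) \<and>
               (Du has_derivative (\<lambda>h. Hu z *v h)) (at z) \<and>
               eigvals (- conf_hess (u z) (Du z) (Hu z)) \<in> \<Gamma> \<and>
               f (eigvals (- conf_hess (u z) (Du z) (Hu z))) = 1"
      unfolding classical_sol_def by blast
    have far: "norm (z - y) \<ge> r" if "z \<in> \<Omega>" for z
    proof -
      have "z \<notin> ball y r" using y(2) that by blast
      then show ?thesis by (simp add: dist_norm norm_minus_commute not_less)
    qed
    have sub: "\<Omega> \<subseteq> - cball y R"
    proof
      fix z assume "z \<in> \<Omega>"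
      then have "norm (z - y) > R" using far RF(2) by force
      then show "z \<in> - cball y R" by (simp add: dist_norm norm_minus_commute)
    qed
    have cmp: "\<forall>z\<in>\<Omega>. ereal (u z) \<le> w z"
    proof (rule comparison[OF om(1) om(2) _ wpos bdry EF(2)])
      show "lsc_on \<Omega> w" using vs unfolding visc_super_def by blast
      show "continuous_on \<Omega> u"
        using cs sub by (intro continuous_at_imp_continuous_on ballI has_derivative_continuous) blast
      show "\<forall>z\<in>\<Omega>. u z > 0" using cs sub by blast
      show "\<forall>z\<in>\<Omega>. u z \<le> c"
      proof
        fix z assume z: "z \<in> \<Omega>"
        have rz: "r \<le> norm (z - y)" by (rule far[OF z])
        have "r^2 \<le> (norm (z - y))^2" using rz rp by (simp add: power_mono)
        then have s1: "e * R \<le> (norm (z - y))^2 - R^2" using RF(4) by simp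
        have eRp: "e * R > 0" using EF(3) RF(1) by simp
        have "R / ((norm (z - y))^2 - R^2) \<le> R / (e * R)"
          using s1 eRp RF(1) by (intro divide_left_mono) auto
        also have "\<dots> = e powr (-1)" using RF(1) EF(3) by (simp add: powr_minus divide_inverse)
        finally have le: "R / ((norm (z - y))^2 - R^2) \<le> e powr (-1)" .
        have k0: "k \<ge> 0" using N3 by (simp add: k_def)
        have "u z \<le> \<alpha> * (e powr (-1)) powr k"
        proof -
          have s0: "0 \<le> R / ((norm (z - y))^2 - R^2)" using s1 eRp RF(1) by (intro divide_nonneg_pos) auto
          show ?thesis unfolding u_def using powr_mono2[OF k0 s0 le] apos
            by (intro mult_left_mono) auto
        qed
        also have "\<dots> = \<alpha> * e powr (- ((N - 2) / 2))" by (simp only: powr_powr k_def) (simp add: minus_divide_left)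
        also have "\<dots> = c" by (rule EF(6))
        finally show "u z \<le> c" .
      qed
    next
      fix t z
      assume t0: "0 < t" and t1: "t < 1" and zO: "z \<in> \<Omega>" and wz: "w z = ereal (t * u z)"
        and below: "\<forall>x\<in>\<Omega>. ereal (t * u x) \<le> w x"
      have zS: "z \<in> - cball y R" using sub zO by blast
      let ?\<phi> = "\<lambda>x. t * u x" and ?D = "\<lambda>x. t *\<^sub>R Du x" and ?H = "\<lambda>x. t *\<^sub>R Hu x"
      have hyp: "continuous_on \<Omega> ?H \<and>
         (\<forall>x\<in>\<Omega>. (?\<phi> has_derivative (\<lambda>h. ?D x \<bullet> h)) (at x) \<and> (?D has_derivative (\<lambda>h. ?H x *v h)) (at x)) \<and>
         w z = ereal (?\<phi> z) \<and> (\<forall>\<^sub>F x in at z. ereal (?\<phi> x) \<le> w x)"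
      proof (intro conjI ballI)
        show "continuous_on \<Omega> ?H" using continuous_on_subset[OF Hc sub] by (intro continuous_intros)
      next
        fix x assume "x \<in> \<Omega>"
        then have xS: "x \<in> - cball y R" using sub by blast
        have "((\<lambda>x. t * u x) has_derivative (\<lambda>h. t * (Du x \<bullet> h))) (at x)"
          using cs xS by (intro has_derivative_mult_right) blast
        then show "(?\<phi> has_derivative (\<lambda>h. ?D x \<bullet> h)) (at x)" by simp
        have "((\<lambda>x. t *\<^sub>R Du x) has_derivative (\<lambda>h. t *\<^sub>R (Hu x *v h))) (at x)"
          using cs xS by (intro has_derivative_scaleR_right) blast
        then show "(?D has_derivative (\<lambda>h. ?H x *v h)) (at x)" by (simp add: scaleR_matrix_vector_assoc)
      next
        show "w z = ereal (?\<phi> z)" by (rule wz)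
        show "\<forall>\<^sub>F x in at z. ereal (?\<phi> x) \<le> w x"
          using eventually_at_in_open'[OF om(1) zO] by (rule eventually_mono) (use below in blast)
      qed
      have conc: "eigvals (- conf_hess (?\<phi> z) (?D z) (?H z)) \<notin> closure \<Gamma> \<or>
             f (eigvals (- conf_hess (?\<phi> z) (?D z) (?H z))) \<le> 1"
      proof -
        have V: "\<forall>x0\<in>\<Omega>. \<forall>\<phi> D\<phi> H\<phi>.
        (continuous_on \<Omega> H\<phi> \<and>
         (\<forall>x\<in>\<Omega>. (\<phi> has_derivative (\<lambda>h. D\<phi> x \<bullet> h)) (at x) \<and>
                  (D\<phi> has_derivative (\<lambda>h. H\<phi> x *v h)) (at x)) \<and>
         w x0 = ereal (\<phi> x0) \<and>
         (\<forall>\<^sub>F x in at x0. ereal (\<phi> x) \<le> w x))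
        \<longrightarrow> (eigvals (- conf_hess (\<phi> x0) (D\<phi> x0) (H\<phi> x0)) \<notin> closure \<Gamma> \<or>
             f (eigvals (- conf_hess (\<phi> x0) (D\<phi> x0) (H\<phi> x0))) \<le> 1)"
          using vs unfolding visc_super_def by blast
        have "(continuous_on \<Omega> ?H \<and>
         (\<forall>x\<in>\<Omega>. (?\<phi> has_derivative (\<lambda>h. ?D x \<bullet> h)) (at x) \<and>
                  (?D has_derivative (\<lambda>h. ?H x *v h)) (at x)) \<and>
         w z = ereal (?\<phi> z) \<and>
         (\<forall>\<^sub>F x in at z. ereal (?\<phi> x) \<le> w x))
        \<longrightarrow> (eigvals (- conf_hess (?\<phi> z) (?D z) (?H z)) \<notin> closure \<Gamma> \<or>
             f (eigvals (- conf_hess (?\<phi> z) (?D z) (?H z))) \<le> 1)"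
          using spec[OF spec[OF spec[OF bspec[OF V zO], of ?\<phi>], of ?D], of ?H] .
        then show ?thesis using hyp by blast
      qed
      define s where "s = t powr (- 4 / (N - 2))"
      have s1: "s > 1" unfolding s_def using powr_less_mono2_neg[of "- 4 / (N - 2)" t 1] t0 t1 N3 by simp
      define M where "M = - conf_hess (u z) (Du z) (Hu z)"
      have uz: "u z > 0" using cs zS by blast
      have eqM: "- conf_hess (?\<phi> z) (?D z) (?H z) = s *\<^sub>R M"
        unfolding M_def s_def N_def using conf_hess_scale[OF n3 t0 uz, of "Du z" "Hu z"] by simp
      have Hsym: "Hu z = canH \<alpha> R k y z"
        by (rule canon_sym[OF RF(1) _ _ zS, of u \<alpha> k Du]) (use cs in \<open>auto simp: u_def\<close>)
      have symM: "transpose M = M" unfolding M_def by (rule conf_hess_sym) (simp add: Hsym canH_sym)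
      have "eigvals M \<in> \<Gamma>" "f (eigvals M) = 1" using cs zS unfolding M_def by auto
      from scaled_contra[OF st symM this s1] conc eqM show False by auto
    qed
    have rx: "r \<le> norm (x - y)" by (rule far[OF x])
    have xy: "norm (x - y) \<le> r + d"
    proof -
      have "norm (x - y) \<le> dist x \<xi> + dist \<xi> y" by (metis dist_norm dist_triangle)
      then show ?thesis using \<xi>(2) y(1) by (simp add: dist_commute)
    qed
    have dpos: "d \<ge> 0" unfolding d_def by (rule infdist_nonneg)
    have fb: "\<alpha> / (2 powr ((N - 2) / 2) * ((2 + (1 / r) * d) * d + e) powr ((N - 2) / 2))
         \<le> \<alpha> * (R / ((norm (x - y))^2 - R^2)) powr ((N - 2) / 2)"
      by (rule final_bound[OF N3 apos EF(3) RF(1) RF(2) RF(3) RF(4) dpos rx xy])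
    have "\<alpha> / (2 powr ((N - 2) / 2) * ((2 + \<alpha> powr (- 2 / (N - 2)) * c0 powr (2 / (N - 2)) * d) * d
              + \<alpha> powr (2 / (N - 2)) * c powr (- 2 / (N - 2))) powr ((N - 2) / 2)) \<le> u x"
      using fb unfolding u_def k_def EF(5) e_def .
    then have "ereal (\<alpha> / (2 powr ((N - 2) / 2) * ((2 + \<alpha> powr (- 2 / (N - 2)) * c0 powr (2 / (N - 2)) * d) * d
              + \<alpha> powr (2 / (N - 2)) * c powr (- 2 / (N - 2))) powr ((N - 2) / 2))) \<le> w x"
      using cmp x by (meson ereal_less_eq(3) order_trans)
    then show "let n = real CARD('n); d = infdist x (frontier \<Omega>) in
          w x \<ge> ereal (\<alpha> / (2 powr ((n - 2) / 2) *
             ((2 + \<alpha> powr (- 2 / (n - 2)) * c0 powr (2 / (n - 2)) * d) * d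
              + \<alpha> powr (2 / (n - 2)) * c powr (- 2 / (n - 2))) powr ((n - 2) / 2)))"
      unfolding Let_def N_def d_def .
  qed
qed

end
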